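(* Let $G$ be a biconnected Eulerian graph and let $G_1,\dots,G_k$ be its 2.5-connected components (virtual edges treated as ordinary edges). Then (a) $c(G)=\sum_{i=1}^k c(G_i)-k+1$; (b) $\nu(G)=\sum_{i=1}^k \nu(G_i)-k+1$.
   Context: Graphs are finite, may have parallel edges (so a cycle may have length 2), no loops. A cycle decomposition of $G$ is a set of cycles in $G$ such that each edge lies in exactly one of them. For an Eulerian graph $H$, $c(H)$ and $\nu(H)$ are the minimum and maximum number of cycles in a cycle decomposition of $H$. Biconnected: connected and for all pairwise distinct $u,v,w$ there is a $u$-$v$ path avoiding $w$. For biconnected $H$ not a triangle, $(c,uv)\in V(H)\times E(H)$ is a vertex-edge-separator if $H-uv-c$ is disconnected; then it has exactly two components $C_u\ni u,C_v\ni v$. For $a\in\{u,v\}$ with other endpoint $b$, let $H_a=H[V(C_a)\cup\{c\}]$; if $|E(H_a)|\ge2$, the 2.5-split replaces $H$ by $H_a+ac$ and $H[V(C_b)\cup\{c\}]+ba+ac$, where the two new edges $ac$ are virtual and correspond to each other. $H$ is 2.5-connected if biconnected with no vertex-edge-separator. Applying 2.5-splits until none is possible, and then merging (gluing at corresponding virtual edges and deleting them) the resulting triangles as much as possible into cycles, gives the 2.5-connected components of $G$. *)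

theory Defs
  imports Main "HOL-Library.Multiset"
begin

section \<open>Finite multigraphs with labelled edges (parallel edges allowed, no loops)\<close>

record ('v, 'e) mgraph =
  verts :: "'v set"
  edges :: "'e set"
  ends  :: "'e \<Rightarrow> 'v set"

definition wf_graph :: "('v, 'e) mgraph \<Rightarrow> bool" where
  "wf_graph G \<longleftrightarrow> finite (verts G) \<and> finite (edges G) \<and>
     (\<forall>e\<in>edges G. card (ends G e) = 2 \<and> ends G e \<subseteq> verts G)"

definition degree :: "('v, 'e) mgraph \<Rightarrow> 'v \<Rightarrow> nat" where
  "degree G v = card {e \<in> edges G. v \<in> ends G e}"

definition eulerian :: "('v, 'e) mgraph \<Rightarrow> bool" where
  "eulerian G \<longleftrightarrow> (\<forall>v\<in>verts G. even (degree G v))"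

definition is_cycle :: "('v, 'e) mgraph \<Rightarrow> 'e set \<Rightarrow> bool" where
  "is_cycle G C \<longleftrightarrow> (\<exists>vs es. length vs = length es \<and> length es \<ge> 2 \<and>
       distinct vs \<and> distinct es \<and> set es = C \<and> set es \<subseteq> edges G \<and>
       (\<forall>i<length es. ends G (es ! i) = {vs ! i, vs ! ((i + 1) mod length es)}))"

definition cycle_decomp :: "('v, 'e) mgraph \<Rightarrow> 'e set set \<Rightarrow> bool" where
  "cycle_decomp G D \<longleftrightarrow> (\<forall>C\<in>D. is_cycle G C) \<and>
       (\<forall>C\<in>D. \<forall>C'\<in>D. C \<noteq> C' \<longrightarrow> C \<inter> C' = {}) \<and> \<Union>D = edges G"

definition cmin :: "('v, 'e) mgraph \<Rightarrow> nat" where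
  "cmin G = Min (card ` {D. cycle_decomp G D})"

definition nu :: "('v, 'e) mgraph \<Rightarrow> nat" where
  "nu G = Max (card ` {D. cycle_decomp G D})"

text \<open>Adjacency in the graph G - F - W (edges F and vertices W deleted).\<close>
definition adj_avoid :: "('v, 'e) mgraph \<Rightarrow> 'e set \<Rightarrow> 'v set \<Rightarrow> 'v \<Rightarrow> 'v \<Rightarrow> bool" where
  "adj_avoid G F W x y \<longleftrightarrow> x \<notin> W \<and> y \<notin> W \<and> (\<exists>e\<in>edges G - F. ends G e = {x, y})"

definition reach :: "('v, 'e) mgraph \<Rightarrow> 'e set \<Rightarrow> 'v set \<Rightarrow> 'v \<Rightarrow> 'v \<Rightarrow> bool" where
  "reach G F W x y \<longleftrightarrow> x \<in> verts G - W \<and> (adj_avoid G F W)\<^sup>*\<^sup>* x y"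

definition connected_avoid :: "('v, 'e) mgraph \<Rightarrow> 'e set \<Rightarrow> 'v set \<Rightarrow> bool" where
  "connected_avoid G F W \<longleftrightarrow> verts G - W \<noteq> {} \<and>
     (\<forall>x\<in>verts G - W. \<forall>y\<in>verts G - W. reach G F W x y)"

definition connected :: "('v, 'e) mgraph \<Rightarrow> bool" where
  "connected G \<longleftrightarrow> connected_avoid G {} {}"

definition biconnected :: "('v, 'e) mgraph \<Rightarrow> bool" where
  "biconnected G \<longleftrightarrow> connected G \<and>
     (\<forall>u\<in>verts G. \<forall>v\<in>verts G. \<forall>w\<in>verts G.
        u \<noteq> v \<and> u \<noteq> w \<and> v \<noteq> w \<longrightarrow> reach G {} {w} u v)"

definition is_cycle_graph :: "('v, 'e) mgraph \<Rightarrow> bool" where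
  "is_cycle_graph G \<longleftrightarrow> is_cycle G (edges G) \<and> verts G = \<Union>(ends G ` edges G)"

definition is_triangle :: "('v, 'e) mgraph \<Rightarrow> bool" where
  "is_triangle G \<longleftrightarrow> is_cycle_graph G \<and> card (edges G) = 3"

definition induced :: "('v, 'e) mgraph \<Rightarrow> 'v set \<Rightarrow> ('v, 'e) mgraph" where
  "induced G S = \<lparr>verts = S, edges = {e \<in> edges G. ends G e \<subseteq> S}, ends = ends G\<rparr>"

definition add_edge :: "('v, 'e) mgraph \<Rightarrow> 'e \<Rightarrow> 'v set \<Rightarrow> ('v, 'e) mgraph" where
  "add_edge G x X = \<lparr>verts = verts G \<union> X, edges = insert x (edges G), ends = (ends G)(x := X)\<rparr>"

definition ve_separator :: "('v, 'e) mgraph \<Rightarrow> 'v \<Rightarrow> 'e \<Rightarrow> bool" where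
  "ve_separator H c e \<longleftrightarrow> biconnected H \<and> \<not> is_triangle H \<and>
     c \<in> verts H \<and> e \<in> edges H \<and> \<not> connected_avoid H {e} {c}"

definition comp :: "('v, 'e) mgraph \<Rightarrow> 'v \<Rightarrow> 'e \<Rightarrow> 'v \<Rightarrow> 'v set" where
  "comp H c e a = {y. reach H {e} {c} a y}"

definition other_end :: "('v, 'e) mgraph \<Rightarrow> 'e \<Rightarrow> 'v \<Rightarrow> 'v" where
  "other_end H e a = the_elem (ends H e - {a})"

definition H_part :: "('v, 'e) mgraph \<Rightarrow> 'v \<Rightarrow> 'e \<Rightarrow> 'v \<Rightarrow> ('v, 'e) mgraph" where
  "H_part H c e a = induced H (comp H c e a \<union> {c})"

text \<open>The two graphs produced by the 2.5-split; the new virtual edges ac get the same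
  (fresh) label x in both graphs, which records that they correspond to each other.
  The edge ba re-added to the second graph is the edge e itself (keeping its label).\<close>
definition split_first :: "('v, 'e) mgraph \<Rightarrow> 'v \<Rightarrow> 'e \<Rightarrow> 'v \<Rightarrow> 'e \<Rightarrow> ('v, 'e) mgraph" where
  "split_first H c e a x = add_edge (H_part H c e a) x {a, c}"

definition split_second :: "('v, 'e) mgraph \<Rightarrow> 'v \<Rightarrow> 'e \<Rightarrow> 'v \<Rightarrow> 'e \<Rightarrow> ('v, 'e) mgraph" where
  "split_second H c e a x =
     add_edge (add_edge (H_part H c e (other_end H e a)) e (ends H e)) x {a, c}"

definition split_step :: "('v, 'e) mgraph multiset \<Rightarrow> ('v, 'e) mgraph multiset \<Rightarrow> bool" where
  "split_step L L' \<longleftrightarrow> (\<exists>M H c e a x. L = add_mset H M \<and> ve_separator H c e \<and>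
      a \<in> ends H e \<and> card (edges (H_part H c e a)) \<ge> 2 \<and>
      x \<notin> \<Union>(edges ` set_mset L) \<and>
      L' = add_mset (split_first H c e a x) (add_mset (split_second H c e a x) M))"

definition glue :: "('v, 'e) mgraph \<Rightarrow> ('v, 'e) mgraph \<Rightarrow> 'e \<Rightarrow> ('v, 'e) mgraph" where
  "glue A B x = \<lparr>verts = verts A \<union> verts B, edges = (edges A \<union> edges B) - {x},
     ends = (\<lambda>e. if e \<in> edges A then ends A e else ends B e)\<rparr>"

text \<open>Cycles arising from triangles (all cycle graphs of length >= 3; after the split phase the
  only such pieces are triangles, longer cycles arise only by merging).\<close>
definition merge_step :: "('v, 'e) mgraph multiset \<Rightarrow> ('v, 'e) mgraph multiset \<Rightarrow> bool" where
  "merge_step L L' \<longleftrightarrow> (\<exists>M A B x. L = add_mset A (add_mset B M) \<and>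
      is_cycle_graph A \<and> is_cycle_graph B \<and> card (edges A) \<ge> 3 \<and> card (edges B) \<ge> 3 \<and>
      x \<in> edges A \<and> x \<in> edges B \<and> L' = add_mset (glue A B x) M)"

definition is_25_components :: "('v, 'e) mgraph \<Rightarrow> ('v, 'e) mgraph multiset \<Rightarrow> bool" where
  "is_25_components G K \<longleftrightarrow> (\<exists>L. split_step\<^sup>*\<^sup>* {#G#} L \<and> \<not> (\<exists>L'. split_step L L') \<and>
      merge_step\<^sup>*\<^sup>* L K \<and> \<not> (\<exists>K'. merge_step K K'))"

end

theory Submission
  imports Defs
begin

definition gpath :: "('v, 'e) mgraph \<Rightarrow> 'v list \<Rightarrow> 'e list \<Rightarrow> bool" where
  "gpath H vs es \<longleftrightarrow> length vs = Suc (length es) \<and> distinct vs \<and> distinct es \<and>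
     set es \<subseteq> edges H \<and> (\<forall>i<length es. ends H (es ! i) = {vs ! i, vs ! Suc i})"

definition cyc :: "('v, 'e) mgraph \<Rightarrow> 'v list \<Rightarrow> 'e list \<Rightarrow> bool" where
  "cyc H vs es \<longleftrightarrow> length vs = length es \<and> length es \<ge> 2 \<and>
       distinct vs \<and> distinct es \<and> set es \<subseteq> edges H \<and>
       (\<forall>i<length es. ends H (es ! i) = {vs ! i, vs ! ((i + 1) mod length es)})"

lemma last_len_nth: "length xs = Suc n \<Longrightarrow> last xs = xs ! n"
  by (metis diff_Suc_1 last_conv_nth length_0_conv nat.distinct(1))

lemma hd_len_nth: "length xs \<noteq> 0 \<Longrightarrow> hd xs = xs ! 0"
  by (simp add: hd_conv_nth)

lemma is_cycle_cyc: "is_cycle H C \<longleftrightarrow> (\<exists>vs es. cyc H vs es \<and> set es = C)"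
  unfolding is_cycle_def cyc_def by blast

definition closed :: "('v, 'e) mgraph \<Rightarrow> 'v list \<Rightarrow> 'e list \<Rightarrow> 'e \<Rightarrow> bool" where
  "closed H vs es f \<longleftrightarrow> gpath H vs es \<and> es \<noteq> [] \<and> f \<in> edges H \<and> f \<notin> set es \<and>
     ends H f = {last vs, hd vs}"

lemma cyc_rotate:
  assumes "cyc H vs es"
  shows "cyc H (rotate k vs) (rotate k es)"
proof -
  let ?n = "length es"
  have len: "length vs = ?n" "?n \<ge> 2" using assms by (auto simp: cyc_def)
  have E: "\<And>i. i < ?n \<Longrightarrow> ends H (es ! i) = {vs ! i, vs ! ((i + 1) mod ?n)}"
    using assms by (auto simp: cyc_def)
  have "ends H (rotate k es ! i) = {rotate k vs ! i, rotate k vs ! ((i + 1) mod ?n)}" if i: "i < ?n" for i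
  proof -
    have "rotate k es ! i = es ! ((k + i) mod ?n)" using i by (simp add: nth_rotate)
    moreover have "rotate k vs ! i = vs ! ((k + i) mod ?n)" using i len by (simp add: nth_rotate)
    moreover have "rotate k vs ! ((i + 1) mod ?n) = vs ! ((k + (i + 1) mod ?n) mod ?n)"
    proof -
      have "0 < ?n" using len by linarith
      then have "(i + 1) mod ?n < length vs" using len by simp
      then show ?thesis using len by (simp add: nth_rotate)
    qed
    moreover have "(k + (i + 1) mod ?n) mod ?n = ((k + i) mod ?n + 1) mod ?n"
      by (simp add: mod_add_right_eq add.assoc mod_simps)
    moreover have "(k + i) mod ?n < ?n" using len by (intro mod_less_divisor) linarith
    ultimately show ?thesis using E by simp
  qed
  then show ?thesis using assms by (auto simp: cyc_def)
qed

lemma cyc_closed: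
  assumes "cyc H vs es"
  shows "closed H vs (butlast es) (last es)"
proof -
  let ?n = "length es"
  have len: "length vs = ?n" "?n \<ge> 2" using assms by (auto simp: cyc_def)
  have E: "\<And>i. i < ?n \<Longrightarrow> ends H (es ! i) = {vs ! i, vs ! ((i + 1) mod ?n)}"
    using assms by (auto simp: cyc_def)
  have ne: "es \<noteq> []" using len by auto
  have d: "distinct es" using assms by (auto simp: cyc_def)
  have "es = butlast es @ [last es]" using ne by simp
  then have dl: "last es \<notin> set (butlast es)" using d
    by (metis distinct_append ne append_butlast_last_id disjoint_iff list.set_intros(1))
  have "ends H (butlast es ! i) = {vs ! i, vs ! Suc i}" if "i < length (butlast es)" for i
    using E[of i] that len by (simp add: nth_butlast)
  moreover have "ends H (last es) = {last vs, hd vs}"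
  proof -
    have "last es = es ! (?n - 1)" using ne by (simp add: last_conv_nth)
    moreover have "last vs = vs ! (?n - 1)"
    proof -
      have "vs \<noteq> []" using len by auto
      then show ?thesis using len by (simp add: last_conv_nth)
    qed
    moreover have "hd vs = vs ! 0" using len by (intro hd_len_nth) linarith
    moreover have "(?n - 1 + 1) mod ?n = 0"
    proof -
      have "?n - 1 + 1 = ?n" using len by linarith
      then show ?thesis by simp
    qed
    ultimately show ?thesis using E[of "?n - 1"] len by simp
  qed
  moreover have "set (butlast es) \<subseteq> edges H" "last es \<in> edges H"
    using assms ne by (auto simp: cyc_def dest: in_set_butlastD)
  moreover have "butlast es \<noteq> []" using len by (cases es rule: rev_cases) auto
  ultimately show ?thesis using assms len dl
    by (auto simp: closed_def gpath_def cyc_def distinct_butlast)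
qed

lemma closed_cyc:
  assumes "closed H vs es f"
  shows "cyc H vs (es @ [f])"
proof -
  have g: "gpath H vs es" and ne: "es \<noteq> []" and f: "f \<in> edges H" "f \<notin> set es"
    and ef: "ends H f = {last vs, hd vs}" using assms by (auto simp: closed_def)
  let ?n = "Suc (length es)"
  have len: "length vs = ?n" using g by (simp add: gpath_def)
  have "ends H ((es @ [f]) ! i) = {vs ! i, vs ! ((i + 1) mod ?n)}" if "i < ?n" for i
  proof (cases "i < length es")
    case True then show ?thesis using g by (simp add: gpath_def nth_append)
  next
    case False
    then have i: "i = length es" using that by simp
    have "last vs = vs ! length es"
    proof -
      have "vs \<noteq> []" using len by auto
      then show ?thesis using len by (simp add: last_conv_nth)
    qed
    moreover have "hd vs = vs ! 0" using len by (simp add: hd_len_nth)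
    ultimately show ?thesis using i ef by (auto simp: nth_append)
  qed
  then show ?thesis using g ne f len
    by (auto simp: cyc_def gpath_def Suc_le_eq)
qed

lemma closed_is_cycle:
  assumes "closed H vs es f" shows "is_cycle H (insert f (set es))"
proof -
  have "cyc H vs (es @ [f])" using closed_cyc[OF assms] .
  moreover have "set (es @ [f]) = insert f (set es)" by simp
  ultimately show ?thesis unfolding is_cycle_cyc by blast
qed

lemma cyc_edge_last:
  assumes "cyc H vs es" "f \<in> set es"
  shows "\<exists>vs' es'. cyc H vs' es' \<and> set es' = set es \<and> set vs' = set vs \<and> last es' = f"
proof -
  obtain j where j: "j < length es" "es ! j = f" using assms(2) by (auto simp: in_set_conv_nth)
  let ?n = "length es"
  define k where "k = Suc j"
  have c: "cyc H (rotate k vs) (rotate k es)" using cyc_rotate assms(1) by blast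
  have ne: "es \<noteq> []" using j by auto
  have "last (rotate k es) = rotate k es ! (?n - 1)"
    using ne by (simp add: last_conv_nth)
  also have "\<dots> = es ! ((k + (?n - 1)) mod ?n)" using ne by (simp add: nth_rotate)
  also have "(k + (?n - 1)) mod ?n = j"
  proof -
    have "k + (?n - 1) = j + ?n" using ne unfolding k_def by (cases es) auto
    then show ?thesis using j by simp
  qed
  finally show ?thesis using c j by (intro exI[of _ "rotate k vs"] exI[of _ "rotate k es"]) auto
qed

lemma cyc_vertex_hd:
  assumes "cyc H vs es" "v \<in> set vs"
  shows "\<exists>vs' es'. cyc H vs' es' \<and> set es' = set es \<and> set vs' = set vs \<and> hd vs' = v"
proof -
  obtain j where j: "j < length vs" "vs ! j = v" using assms(2) by (auto simp: in_set_conv_nth)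
  have c: "cyc H (rotate j vs) (rotate j es)" using cyc_rotate assms(1) by blast
  have ne: "vs \<noteq> []" using j by auto
  have "hd (rotate j vs) = rotate j vs ! 0" using ne by (simp add: hd_conv_nth)
  also have "\<dots> = vs ! j" using ne j by (simp add: nth_rotate)
  finally show ?thesis using c j by (intro exI[of _ "rotate j vs"] exI[of _ "rotate j es"]) auto
qed

lemma is_cycle_closed:
  assumes "is_cycle H C" "f \<in> C"
  shows "\<exists>vs es. closed H vs es f \<and> C = insert f (set es)"
proof -
  obtain vs es where c: "cyc H vs es" "set es = C" using assms(1)[unfolded is_cycle_cyc] by blast
  then obtain vs' es' where c': "cyc H vs' es'" "set es' = C" "last es' = f"
    using cyc_edge_last[OF c(1)] assms(2) c(2) by blast
  have ne: "es' \<noteq> []" using c' by (auto simp: cyc_def)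
  have "set es' = set (butlast es' @ [last es'])" using ne by simp
  then have "C = insert f (set (butlast es'))" using c' by simp
  then show ?thesis using cyc_closed[OF c'(1)] c' by blast
qed

lemma gpath_rev: "gpath H vs es \<Longrightarrow> gpath H (rev vs) (rev es)"
  unfolding gpath_def
proof (intro conjI allI impI; (elim conjE)?)
  fix i assume a: "length vs = Suc (length es)" "\<forall>i<length es. ends H (es ! i) = {vs ! i, vs ! Suc i}"
    "i < length (rev es)"
  have "rev es ! i = es ! (length es - Suc i)" using a by (simp add: rev_nth)
  moreover have "rev vs ! i = vs ! Suc (length es - Suc i)" using a by (simp add: rev_nth Suc_diff_Suc)
  moreover have "rev vs ! Suc i = vs ! (length es - Suc i)" using a by (simp add: rev_nth)
  ultimately show "ends H (rev es ! i) = {rev vs ! i, rev vs ! Suc i}" using a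
    by (simp add: insert_commute)
qed auto

lemma closed_rev: "closed H vs es f \<Longrightarrow> closed H (rev vs) (rev es) f"
  unfolding closed_def using gpath_rev
  by (metis hd_rev insert_commute last_rev rev_is_Nil_conv set_rev)

lemma gpath_take:
  assumes "gpath H vs es" "k \<le> length es"
  shows "gpath H (take (Suc k) vs) (take k es)"
  using assms unfolding gpath_def
  by (auto dest: in_set_takeD)

lemma gpath_drop:
  assumes "gpath H vs es" "k \<le> length es"
  shows "gpath H (drop k vs) (drop k es)"
  using assms unfolding gpath_def
  by (auto dest: in_set_dropD simp: add.commute)

lemma gpath_append:
  assumes "gpath H vs1 es1" "gpath H vs2 es2" "last vs1 = hd vs2"
    "set vs1 \<inter> set (tl vs2) = {}" "set es1 \<inter> set es2 = {}"
  shows "gpath H (vs1 @ tl vs2) (es1 @ es2)"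
proof -
  have l1: "length vs1 = Suc (length es1)" and l2: "length vs2 = Suc (length es2)"
    using assms by (auto simp: gpath_def)
  have E1: "\<And>i. i < length es1 \<Longrightarrow> ends H (es1 ! i) = {vs1 ! i, vs1 ! Suc i}"
    and E2: "\<And>i. i < length es2 \<Longrightarrow> ends H (es2 ! i) = {vs2 ! i, vs2 ! Suc i}"
    using assms by (auto simp: gpath_def)
  have "ends H ((es1 @ es2) ! i) = {(vs1 @ tl vs2) ! i, (vs1 @ tl vs2) ! Suc i}"
    if i: "i < length (es1 @ es2)" for i
  proof (cases "i < length es1")
    case True
    then show ?thesis using E1[of i] l1 by (auto simp: nth_append)
  next
    case False
    define j where "j = i - length es1"
    have j: "j < length es2" using i False j_def by auto
    have "(es1 @ es2) ! i = es2 ! j" using False j_def by (simp add: nth_append)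
    moreover have "(vs1 @ tl vs2) ! Suc i = vs2 ! Suc j"
    proof -
      have "(vs1 @ tl vs2) ! Suc i = tl vs2 ! j" using False j_def l1 by (simp add: nth_append Suc_diff_le)
      also have "\<dots> = vs2 ! Suc j" using j l2 by (simp add: nth_tl)
      finally show ?thesis .
    qed
    moreover have "(vs1 @ tl vs2) ! i = vs2 ! j"
    proof (cases "j = 0")
      case True
      then have "i = length es1" using False j_def by simp
      then have "(vs1 @ tl vs2) ! i = last vs1" using l1 by (simp add: nth_append last_len_nth)
      then show ?thesis using assms(3) True l2 by (simp add: hd_len_nth)
    next
      case False
      then obtain j' where j': "j = Suc j'" by (cases j) auto
      have ii: "i = Suc (length es1 + j')" using j_def \<open>\<not> i < length es1\<close> j' by simp
      have "(vs1 @ tl vs2) ! i = tl vs2 ! j'" using l1 unfolding ii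
        by (simp add: nth_append)
      also have "\<dots> = vs2 ! j" using j' j l2 by (simp add: nth_tl)
      finally show ?thesis .
    qed
    ultimately show ?thesis using E2[OF j] by simp
  qed
  moreover have "distinct (vs1 @ tl vs2)" using assms
    by (auto simp: gpath_def distinct_tl)
  ultimately show ?thesis using assms l1 l2 by (auto simp: gpath_def)
qed

lemma gpath_mono:
  assumes "gpath H vs es" "set es \<subseteq> edges H'" "\<forall>f\<in>set es. ends H' f = ends H f"
  shows "gpath H' vs es"
  using assms unfolding gpath_def by auto

lemma gpath_vertex:
  assumes "gpath H vs es" "es \<noteq> []" "v \<in> set vs"
  shows "\<exists>f\<in>set es. v \<in> ends H f"
proof -
  obtain i where i: "i < length vs" "vs ! i = v" using assms(3) by (auto simp: in_set_conv_nth)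
  have l: "length vs = Suc (length es)" using assms(1) by (simp add: gpath_def)
  show ?thesis
  proof (cases "i < length es")
    case True
    then show ?thesis using assms(1) i by (force simp: gpath_def)
  next
    case False
    then have "i = Suc (length es - 1)" using i l assms(2) by auto
    then show ?thesis using assms i l
      by (auto simp: gpath_def intro!: bexI[of _ "es ! (length es - 1)"])
  qed
qed


lemma reach_verts:
  assumes "wf_graph G" "reach G F W x y"
  shows "y \<in> verts G - W"
proof -
  have x: "x \<in> verts G - W" and r: "(adj_avoid G F W)\<^sup>*\<^sup>* x y" using assms(2) by (auto simp: reach_def)
  from r show ?thesis
  proof (induction rule: rtranclp_induct)
    case base then show ?case using x by simp
  next
    case (step y z)
    then obtain f where "f \<in> edges G" "ends G f = {y, z}" "z \<notin> W" by (auto simp: adj_avoid_def)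
    then show ?case using assms(1) by (auto simp: wf_graph_def)
  qed
qed

lemma reach_trans: "reach G F W x y \<Longrightarrow> reach G F W y z \<Longrightarrow> reach G F W x z"
  unfolding reach_def by auto

lemma adj_sym: "adj_avoid G F W x y \<Longrightarrow> adj_avoid G F W y x"
  unfolding adj_avoid_def by (auto simp: insert_commute)

lemma reach_sym:
  assumes "wf_graph G" "reach G F W x y"
  shows "reach G F W y x"
proof -
  have y: "y \<in> verts G - W" using reach_verts[OF assms] .
  have "(adj_avoid G F W)\<^sup>*\<^sup>* x y" using assms(2) by (simp add: reach_def)
  then have "(adj_avoid G F W)\<^sup>*\<^sup>* y x"
  proof (induction rule: rtranclp_induct)
    case base then show ?case by simp
  next
    case (step y z)
    have "adj_avoid G F W z y" using step(2) by (rule adj_sym)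
    then show ?case using step(3) by (rule converse_rtranclp_into_rtranclp)
  qed
  then show ?thesis using y by (simp add: reach_def)
qed

lemma reach_refl: "x \<in> verts G - W \<Longrightarrow> reach G F W x x"
  unfolding reach_def by auto

lemma reach_adj: "x \<in> verts G - W \<Longrightarrow> adj_avoid G F W x y \<Longrightarrow> reach G F W x y"
  unfolding reach_def by auto

lemma reach_mono:
  assumes "reach G F W x y" "\<And>u v. adj_avoid G F W u v \<Longrightarrow> adj_avoid G F' W' u v" "x \<notin> W'"
  shows "reach G F' W' x y"
proof -
  have r: "(adj_avoid G F W)\<^sup>*\<^sup>* x y" and "x \<in> verts G" using assms(1) by (auto simp: reach_def)
  from r have "(adj_avoid G F' W')\<^sup>*\<^sup>* x y"
    by (induction rule: rtranclp_induct) (auto intro: rtranclp.rtrancl_into_rtrancl assms(2))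
  then show ?thesis using assms \<open>x \<in> verts G\<close> by (auto simp: reach_def)
qed

lemma path_reach:
  assumes "wf_graph H" "gpath H vs es" "set es \<inter> F = {}" "set vs \<inter> W = {}" "hd vs \<in> verts H"
  shows "reach H F W (hd vs) (last vs)"
  using assms(2-)
proof (induction es arbitrary: vs)
  case Nil
  then obtain v where "vs = [v]" by (auto simp: gpath_def length_Suc_conv)
  then show ?case using Nil by (auto intro: reach_refl)
next
  case (Cons f es)
  then obtain v0 vs' where vs: "vs = v0 # vs'" by (cases vs) (auto simp: gpath_def)
  have l: "length vs' = Suc (length es)" using Cons vs by (simp add: gpath_def)
  have g': "gpath H vs' es" using gpath_drop[OF Cons.prems(1), of 1] vs by simp
  have ef: "ends H f = {v0, hd vs'}" using Cons.prems(1) vs l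
    by (auto simp: gpath_def hd_len_nth)
  have f: "f \<in> edges H" "f \<notin> F" using Cons.prems by (auto simp: gpath_def)
  have hv: "hd vs' \<in> set vs'" using l by (cases vs') auto
  have "hd vs' \<in> verts H" using assms(1) ef f by (auto simp: wf_graph_def)
  then have r: "reach H F W (hd vs') (last vs')" using Cons.IH[OF g'] Cons.prems vs by auto
  have "adj_avoid H F W v0 (hd vs')" using ef f Cons.prems(3) vs hv by (auto simp: adj_avoid_def)
  then have "reach H F W v0 (hd vs')" using Cons.prems vs by (auto intro: reach_adj)
  then show ?case using r vs l by (auto intro: reach_trans)
qed

lemma path_reach_all:
  assumes "wf_graph H" "gpath H vs es" "set es \<inter> F = {}" "set vs \<inter> W = {}" "hd vs \<in> verts H"
    "v \<in> set vs"
  shows "reach H F W (hd vs) v"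
proof -
  obtain i where i: "i < length vs" "vs ! i = v" using assms(6) by (auto simp: in_set_conv_nth)
  have l: "length vs = Suc (length es)" using assms(2) by (simp add: gpath_def)
  have g: "gpath H (take (Suc i) vs) (take i es)" using gpath_take[OF assms(2), of i] i l by simp
  have "hd (take (Suc i) vs) = hd vs" using i by (cases vs) auto
  moreover have "last (take (Suc i) vs) = v" using i
    by (simp add: last_len_nth)
  moreover have "set (take i es) \<inter> F = {}" "set (take (Suc i) vs) \<inter> W = {}"
    using assms(3,4) by (auto dest: in_set_takeD)
  ultimately show ?thesis using path_reach[OF assms(1) g] assms(5) by auto
qed


lemma card2_obtain:
  assumes "card S = 2"
  obtains u w where "S = {u, w}" "u \<noteq> w"
  using assms by (auto simp: card_2_iff)

locale sepl =
  fixes H :: "('v, 'e) mgraph" and c :: 'v and e :: 'e and a b :: 'v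
  assumes wf: "wf_graph H" and bic: "biconnected H" and cv: "c \<in> verts H" and ee: "e \<in> edges H"
    and ncon: "\<not> connected_avoid H {e} {c}" and eab: "ends H e = {a, b}"
begin

definition "Ca = comp H c e a"
definition "Cb = comp H c e b"
definition "Ea = {f \<in> edges H. ends H f \<subseteq> Ca \<union> {c}}"
definition "Eb = {f \<in> edges H. ends H f \<subseteq> Cb \<union> {c}}"

lemma ab: "a \<noteq> b"
  using wf ee eab by (auto simp: wf_graph_def)

lemma abv: "a \<in> verts H" "b \<in> verts H"
  using wf ee eab by (auto simp: wf_graph_def)

lemma ends_wf: "f \<in> edges H \<Longrightarrow> card (ends H f) = 2 \<and> ends H f \<subseteq> verts H"
  using wf by (auto simp: wf_graph_def)

lemma bic_reach:
  assumes "u \<in> verts H - {c}" "v \<in> verts H - {c}"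
  shows "reach H {} {c} u v"
proof (cases "u = v")
  case True then show ?thesis using assms by (auto intro: reach_refl)
next
  case False
  then show ?thesis using bic assms cv unfolding biconnected_def by auto
qed

lemma c_ne: "c \<noteq> a" "c \<noteq> b"
proof -
  have "connected_avoid H {e} {c}" if cab: "c \<in> {a, b}"
  proof -
    have adj: "adj_avoid H {e} {c} u v" if aa: "adj_avoid H {} {c} u v" for u v
    proof -
      obtain f where f: "f \<in> edges H" "ends H f = {u, v}" "u \<noteq> c" "v \<noteq> c"
        using aa unfolding adj_avoid_def by blast
      have "f \<noteq> e" using f cab eab by auto
      then show ?thesis using f by (auto simp: adj_avoid_def)
    qed
    have "verts H - {c} \<noteq> {}" using abv ab cab by auto
    moreover have "reach H {e} {c} u v" if "u \<in> verts H - {c}" "v \<in> verts H - {c}" for u v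
      using reach_mono[OF bic_reach[OF that] adj] that by auto
    ultimately show ?thesis unfolding connected_avoid_def by auto
  qed
  then show "c \<noteq> a" "c \<noteq> b" using ncon by auto
qed

lemma aC: "a \<in> Ca" and bC: "b \<in> Cb"
  using abv c_ne by (auto simp: Ca_def Cb_def comp_def intro!: reach_refl)

lemma reach_Ca: "u \<in> Ca \<Longrightarrow> reach H {e} {c} u w \<Longrightarrow> w \<in> Ca"
  unfolding Ca_def comp_def by (auto intro: reach_trans)

lemma reach_Cb: "u \<in> Cb \<Longrightarrow> reach H {e} {c} u w \<Longrightarrow> w \<in> Cb"
  unfolding Cb_def comp_def by (auto intro: reach_trans)

lemma comp_verts: "Ca \<subseteq> verts H - {c}" "Cb \<subseteq> verts H - {c}"
  unfolding Ca_def Cb_def comp_def using reach_verts[OF wf] by blast+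

lemma cover:
  assumes "v \<in> verts H - {c}"
  shows "v \<in> Ca \<or> v \<in> Cb"
proof -
  have av: "a \<in> verts H - {c}" using abv c_ne by auto
  have r: "(adj_avoid H {} {c})\<^sup>*\<^sup>* a v" using bic_reach[OF av assms] by (simp add: reach_def)
  then show ?thesis
  proof (induction rule: rtranclp_induct)
    case base then show ?case using aC by simp
  next
    case (step u w)
    obtain f where f: "f \<in> edges H" "ends H f = {u, w}" "u \<noteq> c" "w \<noteq> c"
      using step(2) by (auto simp: adj_avoid_def)
    have uv: "u \<in> verts H - {c}" using step(3) comp_verts by auto
    show ?case
    proof (cases "f = e")
      case True
      then have "w \<in> {a, b}" using f eab by auto
      then show ?thesis using aC bC by auto
    next
      case False
      then have "adj_avoid H {e} {c} u w" using f by (auto simp: adj_avoid_def)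
      then have "reach H {e} {c} u w" using uv by (rule reach_adj[rotated])
      then show ?thesis using step(3) reach_Ca reach_Cb by blast
    qed
  qed
qed

lemma disj: "Ca \<inter> Cb = {}"
proof (rule ccontr)
  assume "Ca \<inter> Cb \<noteq> {}"
  then obtain v where v: "v \<in> Ca" "v \<in> Cb" by auto
  have rav: "reach H {e} {c} a v" using v by (simp add: Ca_def comp_def)
  have rbv: "reach H {e} {c} b v" using v by (simp add: Cb_def comp_def)
  have rab: "reach H {e} {c} a b" using reach_trans[OF rav reach_sym[OF wf rbv]] .
  have allC: "w \<in> Ca" if "w \<in> verts H - {c}" for w
    using cover[OF that]
  proof
    assume "w \<in> Cb"
    then have "reach H {e} {c} b w" by (simp add: Cb_def comp_def)
    then show "w \<in> Ca" using reach_trans[OF rab] by (simp add: Ca_def comp_def)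
  qed simp
  have "connected_avoid H {e} {c}"
    unfolding connected_avoid_def
  proof (intro conjI ballI)
    show "verts H - {c} \<noteq> {}" using abv c_ne by auto
  next
    fix u w assume "u \<in> verts H - {c}" "w \<in> verts H - {c}"
    then have r1: "reach H {e} {c} a u" and r2: "reach H {e} {c} a w" using allC by (auto simp: Ca_def comp_def)
    show "reach H {e} {c} u w" using reach_trans[OF reach_sym[OF wf r1] r2] .
  qed
  then show False using ncon by simp
qed

lemma edge_cases:
  assumes "f \<in> edges H" "f \<noteq> e"
  shows "ends H f \<subseteq> Ca \<union> {c} \<or> ends H f \<subseteq> Cb \<union> {c}"
proof -
  obtain u w where uw: "ends H f = {u, w}" "u \<noteq> w" using ends_wf[OF assms(1)] card2_obtain by metis
  have uwv: "u \<in> verts H" "w \<in> verts H" using ends_wf[OF assms(1)] uw by auto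
  show ?thesis
  proof (cases "c \<in> {u, w}")
    case True
    then show ?thesis using cover uwv uw by auto
  next
    case False
    then have adj: "adj_avoid H {e} {c} u w" using uw assms by (auto simp: adj_avoid_def)
    have r: "reach H {e} {c} u w" using reach_adj[OF _ adj] uwv False by auto
    have "u \<in> Ca \<or> u \<in> Cb" using cover uwv False by auto
    then show ?thesis using reach_Ca[OF _ r] reach_Cb[OF _ r] uw by auto
  qed
qed

lemma Ea_Eb: "Ea \<inter> Eb = {}"
proof -
  have False if "f \<in> Ea" "f \<in> Eb" for f
  proof -
    have "ends H f \<subseteq> {c}" using that disj by (auto simp: Ea_def Eb_def)
    moreover have "card (ends H f) = 2" using that ends_wf by (auto simp: Ea_def)
    ultimately show False by (metis card.empty card.insert card_mono empty_iff finite.intros(1)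
        finite.insertI le_antisym subset_singleton_iff zero_neq_numeral n_not_Suc_n numeral_2_eq_2)
  qed
  then show ?thesis by auto
qed

lemma e_notin: "e \<notin> Ea" "e \<notin> Eb"
  using eab disj aC bC c_ne comp_verts by (auto simp: Ea_def Eb_def)

lemma edges_split: "edges H = insert e (Ea \<union> Eb)"
  using edge_cases ee by (auto simp: Ea_def Eb_def)

lemma Ea_sub: "Ea \<subseteq> edges H" and Eb_sub: "Eb \<subseteq> edges H"
  by (auto simp: Ea_def Eb_def)

lemma verts_split: "verts H = insert c (Ca \<union> Cb)"
  using cover comp_verts cv by auto

end


lemma cyc_ends_sub:
  assumes "cyc H vs es" "f \<in> set es"
  shows "ends H f \<subseteq> set vs"
proof -
  obtain i where i: "i < length es" "es ! i = f" using assms(2) by (auto simp: in_set_conv_nth)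
  have l: "length vs = length es" "length es \<ge> 2" using assms(1) by (auto simp: cyc_def)
  have "ends H f = {vs ! i, vs ! ((i + 1) mod length es)}" using assms(1) i by (auto simp: cyc_def)
  moreover have "(i + 1) mod length es < length vs" using l by (metis mod_less_divisor le_trans
        one_le_numeral less_le_trans zero_less_one)
  ultimately show ?thesis using i l by auto
qed

lemma cyc_verts:
  assumes "wf_graph H" "cyc H vs es"
  shows "set vs \<subseteq> verts H"
proof
  fix v assume "v \<in> set vs"
  then obtain i where i: "i < length vs" "vs ! i = v" by (auto simp: in_set_conv_nth)
  have l: "length vs = length es" using assms(2) by (auto simp: cyc_def)
  have "ends H (es ! i) = {vs ! i, vs ! ((i + 1) mod length es)}" "es ! i \<in> edges H"
    using assms(2) i l by (auto simp: cyc_def)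
  then show "v \<in> verts H" using assms(1) i by (auto simp: wf_graph_def)
qed

lemma is_cycle_mono:
  assumes "is_cycle H' C" "C \<subseteq> edges H" "\<forall>f\<in>C. ends H f = ends H' f"
  shows "is_cycle H C"
  using assms unfolding is_cycle_def by (metis nth_mem)

lemma is_cycle_sub: "is_cycle H C \<Longrightarrow> C \<subseteq> edges H"
  unfolding is_cycle_def by auto

lemma is_cycle_ne: "is_cycle H C \<Longrightarrow> C \<noteq> {}"
  unfolding is_cycle_def by auto

lemma gpath_verts_ends:
  assumes "gpath H vs es" "es \<noteq> []" "\<forall>f\<in>set es. ends H f \<subseteq> S"
  shows "set vs \<subseteq> S"
  using gpath_vertex[OF assms(1,2)] assms(3) by blast

lemma gpath_verts:
  assumes "wf_graph H" "gpath H vs es" "es \<noteq> []"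
  shows "set vs \<subseteq> verts H"
  using gpath_verts_ends[OF assms(2,3)] assms(1,2) by (auto simp: wf_graph_def gpath_def)

lemma closed_orient:
  assumes "closed H vs es f" "ends H f = {p, q}"
  shows "\<exists>vs' es'. closed H vs' es' f \<and> set es' = set es \<and> set vs' = set vs \<and> hd vs' = p \<and> last vs' = q"
proof -
  have lh: "{last vs, hd vs} = {p, q}" using assms by (simp add: closed_def)
  have ne: "vs \<noteq> []" using assms(1) by (auto simp: closed_def gpath_def)
  have "last vs \<noteq> hd vs"
  proof
    assume eq: "last vs = hd vs"
    have l: "length vs = Suc (length es)" "es \<noteq> []" "distinct vs" using assms(1) by (auto simp: closed_def gpath_def)
    then have "vs ! length es = vs ! 0" using eq by (simp add: last_len_nth hd_len_nth)
    then show False using l nth_eq_iff_index_eq[of vs "length es" 0] by auto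
  qed
  then have "(hd vs = p \<and> last vs = q) \<or> (hd vs = q \<and> last vs = p)" using lh by (auto simp: doubleton_eq_iff)
  then show ?thesis
  proof
    assume "hd vs = p \<and> last vs = q"
    then show ?thesis using assms(1) by blast
  next
    assume h: "hd vs = q \<and> last vs = p"
    have "closed H (rev vs) (rev es) f" using closed_rev[OF assms(1)] .
    moreover have "hd (rev vs) = p" "last (rev vs) = q" using h ne by (auto simp: hd_rev last_rev)
    ultimately show ?thesis by (intro exI[of _ "rev vs"] exI[of _ "rev es"]) auto
  qed
qed

context sepl
begin

lemma path_one_side:
  assumes "gpath H p ps" "e \<notin> set ps" "c \<notin> set p" "p \<noteq> []" "set p \<subseteq> verts H"
  shows "set p \<subseteq> Ca \<or> set p \<subseteq> Cb"
proof -
  have h: "hd p \<in> verts H - {c}" using assms(3-5) by (cases p) auto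
  have r: "\<And>v. v \<in> set p \<Longrightarrow> reach H {e} {c} (hd p) v"
    using path_reach_all[OF wf assms(1)] assms(2,3) h by blast
  from cover[OF h] show ?thesis
  proof
    assume "hd p \<in> Ca" then show ?thesis using r reach_Ca by blast
  next
    assume "hd p \<in> Cb" then show ?thesis using r reach_Cb by blast
  qed
qed

lemma cycle_no_e:
  assumes "is_cycle H C" "e \<notin> C"
  shows "C \<subseteq> Ea \<or> C \<subseteq> Eb"
proof -
  obtain vs es where c0: "cyc H vs es" "set es = C" using assms(1)[unfolded is_cycle_cyc] by blast
  have side: "set vs - {c} \<subseteq> Ca \<or> set vs - {c} \<subseteq> Cb"
  proof (cases "c \<in> set vs")
    case True
    obtain vs' es' where c': "cyc H vs' es'" "set es' = set es" "set vs' = set vs" "hd vs' = c"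
      using cyc_vertex_hd[OF c0(1) True] by blast
    have cl: "closed H vs' (butlast es') (last es')" using cyc_closed[OF c'(1)] .
    have g: "gpath H vs' (butlast es')" using cl by (simp add: closed_def)
    have lv: "length vs' \<ge> 2" "length vs' = Suc (length (butlast es'))"
      using c'(1) g by (auto simp: cyc_def gpath_def)
    have g1: "gpath H (drop 1 vs') (drop 1 (butlast es'))" using gpath_drop[OF g, of 1] lv by simp
    have dv: "distinct vs'" using c'(1) by (simp add: cyc_def)
    have sv: "set (drop 1 vs') = set vs' - {c}"
      using dv c'(4) lv by (cases vs') auto
    have "set (drop 1 vs') \<subseteq> Ca \<or> set (drop 1 vs') \<subseteq> Cb"
    proof (rule path_one_side[OF g1])
      show "e \<notin> set (drop 1 (butlast es'))" using assms(2) c0(2) c'(2)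
        by (auto dest: in_set_dropD in_set_butlastD)
      show "c \<notin> set (drop 1 vs')" using sv by simp
      show "drop 1 vs' \<noteq> []" using lv by simp
      show "set (drop 1 vs') \<subseteq> verts H" using cyc_verts[OF wf c'(1)] by (auto dest: in_set_dropD)
    qed
    then show ?thesis using sv c'(3) by simp
  next
    case False
    have cl: "closed H vs (butlast es) (last es)" using cyc_closed[OF c0(1)] .
    have g: "gpath H vs (butlast es)" using cl by (simp add: closed_def)
    have "set vs \<subseteq> Ca \<or> set vs \<subseteq> Cb"
    proof (rule path_one_side[OF g])
      show "e \<notin> set (butlast es)" using assms(2) c0(2) by (auto dest: in_set_butlastD)
      show "c \<notin> set vs" using False .
      show "vs \<noteq> []" using c0(1) by (auto simp: cyc_def)
      show "set vs \<subseteq> verts H" using cyc_verts[OF wf c0(1)] .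
    qed
    then show ?thesis by auto
  qed
  have "\<And>f. f \<in> C \<Longrightarrow> ends H f \<subseteq> set vs" using cyc_ends_sub[OF c0(1)] c0(2) by blast
  moreover have "C \<subseteq> edges H" using is_cycle_sub[OF assms(1)] .
  ultimately show ?thesis using side unfolding Ea_def Eb_def by blast
qed

end


locale sepx = sepl +
  fixes x
  assumes xf: "x \<notin> edges H"
begin

definition "H1 = split_first H c e a x"
definition "H2 = split_second H c e a x"

lemma other_b: "other_end H e a = b"
  using eab ab by (simp add: other_end_def insert_Diff_if)

lemma verts_H1: "verts H1 = Ca \<union> {c}"
  and edges_H1: "edges H1 = insert x Ea"
  and ends_H1: "ends H1 = (ends H)(x := {a, c})"
  using aC unfolding H1_def split_first_def add_edge_def H_part_def induced_def Ca_def Ea_def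
  by auto

lemma ends_H2: "ends H2 = (ends H)(x := {a, c})"
  unfolding H2_def split_second_def add_edge_def H_part_def induced_def by simp

lemma verts_H2: "verts H2 = insert a (Cb \<union> {c})"
  and edges_H2: "edges H2 = insert x (insert e Eb)"
  using bC eab unfolding H2_def split_second_def add_edge_def H_part_def induced_def Cb_def Eb_def other_b
  by auto

lemma x_ne: "x \<notin> Ea" "x \<notin> Eb" "x \<noteq> e"
  using xf Ea_sub Eb_sub ee by auto

lemma cycle_e:
  assumes "is_cycle H Z" "e \<in> Z"
  shows "is_cycle H1 (insert x (Z \<inter> Ea)) \<and> is_cycle H2 (insert x (insert e (Z \<inter> Eb)))"
proof -
  obtain vs0 es0 where cl0: "closed H vs0 es0 e" "Z = insert e (set es0)"
    using is_cycle_closed[OF assms] by blast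
  obtain vs es where cl: "closed H vs es e" and Zs: "Z = insert e (set es)" and hv: "hd vs = a"
    and lv: "last vs = b"
    using closed_orient[OF cl0(1) eab] cl0(2) by metis
  have g: "gpath H vs es" and ne: "es \<noteq> []" and en: "e \<notin> set es" using cl by (auto simp: closed_def)
  let ?m = "length es"
  have l: "length vs = Suc ?m" and dv: "distinct vs" using g by (auto simp: gpath_def)
  have E: "\<And>i. i < ?m \<Longrightarrow> ends H (es ! i) = {vs ! i, vs ! Suc i}" using g by (auto simp: gpath_def)
  have v0: "vs ! 0 = a" using hv l by (simp add: hd_len_nth)
  have vm: "vs ! ?m = b" using lv l by (simp add: last_len_nth)
  have vsv: "set vs \<subseteq> verts H" using gpath_verts[OF wf g ne] .
  have "c \<in> set vs"
  proof (rule ccontr)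
    assume "c \<notin> set vs"
    then have "reach H {e} {c} (hd vs) (last vs)"
      using path_reach[OF wf g] en vsv l by (cases vs) auto
    then have "b \<in> Ca" using hv lv by (simp add: Ca_def comp_def)
    then show False using bC disj by auto
  qed
  then obtain k where k: "k < length vs" "vs ! k = c" by (auto simp: in_set_conv_nth)
  have k0: "k \<noteq> 0" using k v0 c_ne by (cases k) auto
  have km: "k \<noteq> ?m" using k vm c_ne by auto
  have kl: "0 < k" "k < ?m" using k0 km k l by auto
  have idx: "\<And>i. i < length vs \<Longrightarrow> vs ! i = c \<Longrightarrow> i = k"
    using k dv nth_eq_iff_index_eq by metis
  have pre: "vs ! i \<in> Ca" if i: "i < k" for i
  proof -
    have gt: "gpath H (take k vs) (take (k - 1) es)" using gpath_take[OF g, of "k - 1"] kl by simp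
    have cn: "c \<notin> set (take k vs)"
    proof
      assume "c \<in> set (take k vs)"
      then obtain j where "j < length (take k vs)" "take k vs ! j = c" by (auto simp: in_set_conv_nth)
      then show False using idx[of j] kl l by auto
    qed
    have "vs ! i \<in> set (take k vs)" using i kl l by (auto simp: in_set_conv_nth intro!: exI[of _ i])
    moreover have "hd (take k vs) = a" using hv kl l by (cases vs) auto
    moreover have "hd (take k vs) \<in> verts H" using vsv kl l by (cases vs) auto
    moreover have "set (take (k - 1) es) \<inter> {e} = {}" using en by (auto dest: in_set_takeD)
    ultimately have "reach H {e} {c} a (vs ! i)"
      using path_reach_all[OF wf gt, of "{e}" "{c}" "vs ! i"] cn by auto
    then show ?thesis by (simp add: Ca_def comp_def)
  qed
  have suf: "vs ! i \<in> Cb" if i: "k < i" "i \<le> ?m" for i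
  proof -
    have gd: "gpath H (drop i vs) (drop i es)" using gpath_drop[OF g, of i] i by simp
    have cn: "c \<notin> set (drop i vs)"
    proof
      assume "c \<in> set (drop i vs)"
      then obtain j where "j < length (drop i vs)" "drop i vs ! j = c" by (auto simp: in_set_conv_nth)
      then have "i + j < length vs" "vs ! (i + j) = c" using i l by auto
      then have "i + j = k" by (rule idx)
      then show False using i by simp
    qed
    have hd: "hd (drop i vs) = vs ! i" using i l by (simp add: hd_drop_conv_nth)
    have ld: "last (drop i vs) = b" using i l lv by simp
    have "hd (drop i vs) \<in> verts H" using vsv i l hd by auto
    moreover have "set (drop i es) \<inter> {e} = {}" using en by (auto dest: in_set_dropD)
    ultimately have "reach H {e} {c} (vs ! i) b"
      using path_reach[OF wf gd, of "{e}" "{c}"] cn hd ld by auto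
    then have "reach H {e} {c} b (vs ! i)" using reach_sym[OF wf] by blast
    then show ?thesis by (simp add: Cb_def comp_def)
  qed
  have tkEa: "set (take k es) \<subseteq> Ea"
  proof
    fix f assume "f \<in> set (take k es)"
    then obtain i where i: "i < k" "es ! i = f" using kl by (auto simp: in_set_conv_nth)
    have "ends H f = {vs ! i, vs ! Suc i}" using E[of i] i kl by auto
    moreover have "vs ! Suc i \<in> Ca \<union> {c}" using pre[of "Suc i"] k i by (cases "Suc i = k") auto
    moreover have "f \<in> edges H" using g i kl by (auto simp: gpath_def)
    ultimately show "f \<in> Ea" using pre[OF i(1)] by (auto simp: Ea_def)
  qed
  have dkEb: "set (drop k es) \<subseteq> Eb"
  proof
    fix f assume "f \<in> set (drop k es)"
    then obtain j where j: "j < ?m - k" "es ! (k + j) = f" by (auto simp: in_set_conv_nth)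
    have "ends H f = {vs ! (k + j), vs ! Suc (k + j)}" using E[of "k + j"] j by auto
    moreover have "vs ! (k + j) \<in> Cb \<union> {c}" using suf[of "k + j"] k j by (cases j) auto
    moreover have "vs ! Suc (k + j) \<in> Cb" using suf[of "Suc (k + j)"] j by auto
    moreover have "f \<in> edges H" using g j by (auto simp: gpath_def)
    ultimately show "f \<in> Eb" by (auto simp: Eb_def)
  qed
  have sp: "set es = set (take k es) \<union> set (drop k es)"
    by (metis append_take_drop_id set_append)
  have ZEa: "Z \<inter> Ea = set (take k es)"
    using Zs sp tkEa dkEb Ea_Eb e_notin by auto
  have ZEb: "Z \<inter> Eb = set (drop k es)"
    using Zs sp tkEa dkEb Ea_Eb e_notin by auto
  have c1: "closed H1 (take (Suc k) vs) (take k es) x"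
    unfolding closed_def
  proof (intro conjI)
    show "gpath H1 (take (Suc k) vs) (take k es)"
    proof (rule gpath_mono[OF gpath_take[OF g]])
      show "k \<le> ?m" using kl by simp
      show "set (take k es) \<subseteq> edges H1" using tkEa edges_H1 by auto
      show "\<forall>f\<in>set (take k es). ends H1 f = ends H f" using tkEa x_ne ends_H1 by auto
    qed
    show "take k es \<noteq> []" using kl ne by simp
    show "x \<in> edges H1" using edges_H1 by simp
    show "x \<notin> set (take k es)" using tkEa x_ne by auto
    have "last (take (Suc k) vs) = c" using k by (simp add: last_len_nth)
    moreover have "hd (take (Suc k) vs) = a" using hv l by (cases vs) auto
    ultimately show "ends H1 x = {last (take (Suc k) vs), hd (take (Suc k) vs)}"
      using ends_H1 by auto
  qed
  have gba: "gpath H [b, a] [e]" using eab ab ee by (auto simp: gpath_def insert_commute)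
  have gd: "gpath H (drop k vs) (drop k es)" using gpath_drop[OF g, of k] kl by simp
  have ga: "gpath H (drop k vs @ tl [b, a]) (drop k es @ [e])"
  proof (rule gpath_append[OF gd gba])
    show "last (drop k vs) = hd [b, a]" using lv kl l by simp
    show "set (drop k vs) \<inter> set (tl [b, a]) = {}"
    proof -
      have "a \<notin> set (drop k vs)"
      proof
        assume "a \<in> set (drop k vs)"
        then obtain j where "j < length (drop k vs)" "drop k vs ! j = a" by (auto simp: in_set_conv_nth)
        then have "vs ! (k + j) = vs ! 0" using v0 by simp
        then show False using dv kl l nth_eq_iff_index_eq \<open>j < length (drop k vs)\<close> by fastforce
      qed
      then show ?thesis by simp
    qed
    show "set (drop k es) \<inter> set [e] = {}" using en by (auto dest: in_set_dropD)
  qed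
  have c2: "closed H2 (drop k vs @ [a]) (drop k es @ [e]) x"
    unfolding closed_def
  proof (intro conjI)
    show "gpath H2 (drop k vs @ [a]) (drop k es @ [e])"
    proof (rule gpath_mono)
      show "gpath H (drop k vs @ [a]) (drop k es @ [e])" using ga by simp
      show "set (drop k es @ [e]) \<subseteq> edges H2" using dkEb edges_H2 by auto
      show "\<forall>f\<in>set (drop k es @ [e]). ends H2 f = ends H f" using dkEb x_ne ends_H2 by auto
    qed
    show "drop k es @ [e] \<noteq> []" by simp
    show "x \<in> edges H2" using edges_H2 by simp
    show "x \<notin> set (drop k es @ [e])" using dkEb x_ne by auto
    have "hd (drop k vs @ [a]) = c" using k by (simp add: hd_drop_conv_nth)
    then show "ends H2 x = {last (drop k vs @ [a]), hd (drop k vs @ [a])}"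
      using ends_H2 by (auto simp: insert_commute)
  qed
  show ?thesis using closed_is_cycle[OF c1] closed_is_cycle[OF c2] ZEa ZEb by simp
qed

lemma cycle_H1_nox:
  assumes "is_cycle H1 C" "x \<notin> C"
  shows "is_cycle H C \<and> C \<subseteq> Ea"
proof -
  have s: "C \<subseteq> Ea" using is_cycle_sub[OF assms(1)] assms(2) edges_H1 by auto
  have "is_cycle H C" using is_cycle_mono[OF assms(1)] s Ea_sub ends_H1 assms(2) by auto
  then show ?thesis using s by simp
qed

lemma cycle_H2_nox:
  assumes "is_cycle H2 C" "x \<notin> C" "e \<notin> C"
  shows "is_cycle H C \<and> C \<subseteq> Eb"
proof -
  have s: "C \<subseteq> Eb" using is_cycle_sub[OF assms(1)] assms(2,3) edges_H2 by auto
  have "is_cycle H C" using is_cycle_mono[OF assms(1)] s Eb_sub ends_H2 assms(2) by auto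
  then show ?thesis using s by simp
qed

lemma cycle_to_H1:
  assumes "is_cycle H C" "C \<subseteq> Ea"
  shows "is_cycle H1 C"
proof (rule is_cycle_mono[OF assms(1)])
  show "C \<subseteq> edges H1" using assms(2) edges_H1 by auto
  show "\<forall>f\<in>C. ends H1 f = ends H f" using assms(2) ends_H1 x_ne by auto
qed

lemma cycle_to_H2:
  assumes "is_cycle H C" "C \<subseteq> Eb"
  shows "is_cycle H2 C"
proof (rule is_cycle_mono[OF assms(1)])
  show "C \<subseteq> edges H2" using assms(2) edges_H2 by auto
  show "\<forall>f\<in>C. ends H2 f = ends H f" using assms(2) ends_H2 x_ne by auto
qed

end


context sepx
begin

lemma a_notin: "a \<notin> Cb \<union> {c}"
  using aC disj c_ne by auto

lemma cycle_combine:
  assumes "is_cycle H1 Z1" "x \<in> Z1" "is_cycle H2 Z2" "x \<in> Z2"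
  shows "e \<in> Z2 \<and> is_cycle H ((Z1 - {x}) \<union> (Z2 - {x}))"
proof -
  have ex1: "ends H1 x = {a, c}" using ends_H1 by simp
  have ex2: "ends H2 x = {c, a}" using ends_H2 by (simp add: insert_commute)
  obtain vs0 es0 where cl0: "closed H1 vs0 es0 x" "Z1 = insert x (set es0)"
    using is_cycle_closed[OF assms(1,2)] by blast
  obtain vs1 es1 where cl1: "closed H1 vs1 es1 x" and Z1s: "Z1 = insert x (set es1)"
    and h1: "hd vs1 = a" and l1: "last vs1 = c"
    using closed_orient[OF cl0(1) ex1] cl0(2) by metis
  obtain ws0 fs0 where cl0': "closed H2 ws0 fs0 x" "Z2 = insert x (set fs0)"
    using is_cycle_closed[OF assms(3,4)] by blast
  obtain vs2 es2 where cl2: "closed H2 vs2 es2 x" and Z2s: "Z2 = insert x (set es2)"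
    and h2: "hd vs2 = c" and l2: "last vs2 = a"
    using closed_orient[OF cl0'(1) ex2] cl0'(2) by metis
  have g1: "gpath H1 vs1 es1" and ne1: "es1 \<noteq> []" and xn1: "x \<notin> set es1"
    using cl1 by (auto simp: closed_def)
  have g2: "gpath H2 vs2 es2" and ne2: "es2 \<noteq> []" and xn2: "x \<notin> set es2"
    using cl2 by (auto simp: closed_def)
  have es1Ea: "set es1 \<subseteq> Ea" using g1 xn1 edges_H1 by (auto simp: gpath_def)
  have es2E: "set es2 \<subseteq> insert e Eb" using g2 xn2 edges_H2 by (auto simp: gpath_def)
  let ?m = "length es2"
  have lv2: "length vs2 = Suc ?m" and dv2: "distinct vs2" and de2: "distinct es2"
    using g2 by (auto simp: gpath_def)
  have m0: "0 < ?m" using ne2 by simp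
  have vm: "vs2 ! ?m = a" using l2 lv2 by (simp add: last_len_nth)
  have v0: "vs2 ! 0 = c" using h2 lv2 by (simp add: hd_len_nth)
  define g where "g = es2 ! (?m - 1)"
  have gin: "g \<in> set es2" using m0 unfolding g_def by simp
  have eg2: "ends H2 g = {vs2 ! (?m - 1), vs2 ! ?m}"
  proof -
    have "ends H2 (es2 ! (?m - 1)) = {vs2 ! (?m - 1), vs2 ! Suc (?m - 1)}" using g2 m0 by (simp add: gpath_def)
    then show ?thesis using m0 unfolding g_def by simp
  qed
  have ge: "g = e"
  proof (rule ccontr)
    assume "g \<noteq> e"
    then have "g \<in> Eb" using gin es2E by auto
    then have "ends H g \<subseteq> Cb \<union> {c}" by (simp add: Eb_def)
    moreover have "ends H2 g = ends H g" using ends_H2 \<open>g \<in> Eb\<close> x_ne by auto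
    ultimately show False using eg2 vm a_notin by auto
  qed
  have vb: "vs2 ! (?m - 1) = b"
  proof -
    have "{vs2 ! (?m - 1), a} = {a, b}" using eg2 vm ge ends_H2 eab x_ne by simp
    moreover have "vs2 ! (?m - 1) \<noteq> a"
    proof
      assume "vs2 ! (?m - 1) = a"
      then have eq: "vs2 ! (?m - 1) = vs2 ! ?m" using vm by simp
      have "?m - 1 < length vs2" "?m < length vs2" using lv2 by auto
      then have "?m - 1 = ?m" using nth_eq_iff_index_eq[OF dv2] eq by blast
      then show False using m0 by linarith
    qed
    ultimately show ?thesis by (auto simp: doubleton_eq_iff)
  qed
  have m1: "1 < ?m"
  proof (rule ccontr)
    assume "\<not> 1 < ?m"
    then have "?m = 1" using m0 by linarith
    then show False using vb v0 c_ne by simp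
  qed
  define vs2' where "vs2' = take ?m vs2"
  define es2' where "es2' = take (?m - 1) es2"
  have g2': "gpath H2 vs2' es2'" using gpath_take[OF g2, of "?m - 1"] m0
    unfolding vs2'_def es2'_def by simp
  have es2_dec: "es2 = es2' @ [e]"
  proof -
    have "take (Suc (?m - 1)) es2 = take (?m - 1) es2 @ [es2 ! (?m - 1)]"
      using m0 by (intro take_Suc_conv_app_nth) simp
    then show ?thesis using m0 ge unfolding es2'_def g_def by simp
  qed
  have e_n2': "e \<notin> set es2'" using de2 es2_dec by auto
  have es2'Eb: "set es2' \<subseteq> Eb" using es2E es2_dec e_n2' by auto
  have ne2': "es2' \<noteq> []" using m1 unfolding es2'_def using ne2 by simp
  have lvs2': "last vs2' = b"
  proof -
    have "length vs2' = Suc (?m - 1)" using m0 lv2 unfolding vs2'_def by simp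
    then have "last vs2' = vs2' ! (?m - 1)" by (rule last_len_nth)
    then show ?thesis using vb m0 unfolding vs2'_def by simp
  qed
  have hvs2': "hd vs2' = c" using h2 m0 lv2 unfolding vs2'_def by (cases vs2) auto
  have gH1: "gpath H vs1 es1"
  proof (rule gpath_mono[OF g1])
    show "set es1 \<subseteq> edges H" using es1Ea Ea_sub by auto
    show "\<forall>f\<in>set es1. ends H f = ends H1 f" using es1Ea x_ne ends_H1 by auto
  qed
  have gH2: "gpath H vs2' es2'"
  proof (rule gpath_mono[OF g2'])
    show "set es2' \<subseteq> edges H" using es2'Eb Eb_sub by auto
    show "\<forall>f\<in>set es2'. ends H f = ends H2 f" using es2'Eb x_ne ends_H2 by auto
  qed
  have sv1: "set vs1 \<subseteq> Ca \<union> {c}"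
    using gpath_verts_ends[OF gH1 ne1] es1Ea by (auto simp: Ea_def)
  have sv2: "set vs2' \<subseteq> Cb \<union> {c}"
    using gpath_verts_ends[OF gH2 ne2'] es2'Eb by (auto simp: Eb_def)
  have dvs2': "distinct vs2'" using g2' by (simp add: gpath_def)
  have lvs2'': "length vs2' = ?m" using lv2 unfolding vs2'_def by simp
  have tl2: "set (tl vs2') \<subseteq> Cb"
  proof -
    have "vs2' = c # tl vs2'" using hvs2' lvs2'' m0 by (cases vs2') auto
    then have "c \<notin> set (tl vs2')" using dvs2' by (metis distinct.simps(2))
    moreover have "set (tl vs2') \<subseteq> set vs2'" by (cases vs2') auto
    ultimately show ?thesis using sv2 by auto
  qed
  have tlne: "tl vs2' \<noteq> []" using lvs2'' m1 by (cases vs2') auto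
  have gc: "gpath H (vs1 @ tl vs2') (es1 @ es2')"
  proof (rule gpath_append[OF gH1 gH2])
    show "last vs1 = hd vs2'" using l1 hvs2' by simp
    show "set vs1 \<inter> set (tl vs2') = {}" using sv1 tl2 disj comp_verts by blast
    show "set es1 \<inter> set es2' = {}" using es1Ea es2'Eb Ea_Eb by auto
  qed
  have ccl: "closed H (vs1 @ tl vs2') (es1 @ es2') e"
    unfolding closed_def
  proof (intro conjI)
    show "gpath H (vs1 @ tl vs2') (es1 @ es2')" using gc .
    show "es1 @ es2' \<noteq> []" using ne1 by simp
    show "e \<in> edges H" using ee .
    show "e \<notin> set (es1 @ es2')" using es1Ea es2'Eb e_notin by auto
    have "last (vs1 @ tl vs2') = b" using tlne lvs2' by (simp add: last_tl)
    moreover have "hd (vs1 @ tl vs2') = a" using h1 g1 by (cases vs1) (auto simp: gpath_def)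
    ultimately show "ends H e = {last (vs1 @ tl vs2'), hd (vs1 @ tl vs2')}" using eab by (auto simp: insert_commute)
  qed
  have "Z1 - {x} = set es1" using Z1s xn1 by auto
  moreover have "Z2 - {x} = insert e (set es2')" using Z2s xn2 es2_dec by auto
  ultimately have "(Z1 - {x}) \<union> (Z2 - {x}) = insert e (set (es1 @ es2'))" by auto
  then show ?thesis using closed_is_cycle[OF ccl] Z2s es2_dec by simp
qed

end


definition dec :: "('v, 'e) mgraph \<Rightarrow> 'e set set set" where
  "dec G = {D. cycle_decomp G D}"

lemma dec_sub: "D \<in> dec G \<Longrightarrow> D \<subseteq> Pow (edges G)"
  unfolding dec_def cycle_decomp_def by auto

lemma dec_finite: "finite (edges G) \<Longrightarrow> finite (dec G)"
  by (rule finite_subset[of _ "Pow (Pow (edges G))"]) (auto dest: dec_sub)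

lemma dec_elem_finite: "finite (edges G) \<Longrightarrow> D \<in> dec G \<Longrightarrow> finite D"
  using dec_sub by (metis finite_Pow_iff finite_subset)

lemma cmin_le: "finite (edges G) \<Longrightarrow> D \<in> dec G \<Longrightarrow> cmin G \<le> card D"
  unfolding cmin_def dec_def[symmetric] using dec_finite by (auto intro: Min_le)

lemma nu_ge: "finite (edges G) \<Longrightarrow> D \<in> dec G \<Longrightarrow> card D \<le> nu G"
  unfolding nu_def dec_def[symmetric] using dec_finite by (auto intro: Max_ge)

lemma cmin_ex: "finite (edges G) \<Longrightarrow> dec G \<noteq> {} \<Longrightarrow> \<exists>D\<in>dec G. card D = cmin G"
  unfolding cmin_def dec_def[symmetric] using dec_finite
  by (metis (no_types, lifting) Min_in finite_imageI image_iff image_is_empty)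

lemma nu_ex: "finite (edges G) \<Longrightarrow> dec G \<noteq> {} \<Longrightarrow> \<exists>D\<in>dec G. card D = nu G"
  unfolding nu_def dec_def[symmetric] using dec_finite
  by (metis (no_types, lifting) Max_in finite_imageI image_iff image_is_empty)

context sepx
begin

lemma finE: "finite (edges H)" using wf by (simp add: wf_graph_def)

lemma finH1: "finite (edges H1)" using finE Ea_sub edges_H1 by (auto intro: finite_subset)
lemma finH2: "finite (edges H2)" using finE Eb_sub edges_H2 by (auto intro: finite_subset)

lemma dec_to_pieces:
  assumes D: "D \<in> dec H"
  shows "\<exists>D1 D2. D1 \<in> dec H1 \<and> D2 \<in> dec H2 \<and> card D1 + card D2 = card D + 1"
proof -
  have cyc: "\<And>C. C \<in> D \<Longrightarrow> is_cycle H C" and dsj: "\<And>C C'. C \<in> D \<Longrightarrow> C' \<in> D \<Longrightarrow> C \<noteq> C' \<Longrightarrow> C \<inter> C' = {}"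
    and un: "\<Union>D = edges H" using D by (auto simp: dec_def cycle_decomp_def)
  have finD: "finite D" using dec_elem_finite[OF finE D] .
  obtain Z where Z: "Z \<in> D" "e \<in> Z" using ee un by auto
  define Da where "Da = {C \<in> D. C \<subseteq> Ea}"
  define Db where "Db = {C \<in> D. C \<subseteq> Eb}"
  have Dsplit: "D = insert Z (Da \<union> Db)"
  proof -
    have "C \<in> Da \<union> Db" if "C \<in> D" "C \<noteq> Z" for C
    proof -
      have "e \<notin> C" using dsj[OF that(1) Z(1) that(2)] Z(2) by auto
      then show ?thesis using cycle_no_e[OF cyc[OF that(1)]] that(1) by (auto simp: Da_def Db_def)
    qed
    then show ?thesis using Z(1) by (auto simp: Da_def Db_def)
  qed
  have ZnDa: "Z \<notin> Da" "Z \<notin> Db" using Z(2) e_notin by (auto simp: Da_def Db_def)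
  have DaDb: "Da \<inter> Db = {}"
  proof -
    have False if "C \<in> Da" "C \<in> Db" for C
    proof -
      have "C \<subseteq> Ea \<inter> Eb" using that by (auto simp: Da_def Db_def)
      then have "C = {}" using Ea_Eb by auto
      then show False using is_cycle_ne cyc that by (auto simp: Da_def)
    qed
    then show ?thesis by auto
  qed
  have finDa: "finite Da" "finite Db" using finD by (auto simp: Da_def Db_def)
  have cardD: "card D = card Da + card Db + 1"
    using Dsplit ZnDa DaDb finDa by (simp add: card_Un_disjoint)
  define Z1 where "Z1 = insert x (Z \<inter> Ea)"
  define Z2 where "Z2 = insert x (insert e (Z \<inter> Eb))"
  have cZ: "is_cycle H1 Z1" "is_cycle H2 Z2" using cycle_e[OF cyc[OF Z(1)] Z(2)] by (auto simp: Z1_def Z2_def)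
  define D1 where "D1 = insert Z1 Da"
  define D2 where "D2 = insert Z2 Db"
  have disjZ: "C \<inter> Z = {}" if "C \<in> Da \<union> Db" for C
    using dsj[of C Z] that Z(1) ZnDa by (auto simp: Da_def Db_def)
  have d1: "D1 \<in> dec H1"
    unfolding dec_def cycle_decomp_def mem_Collect_eq
  proof (intro conjI ballI impI)
    fix C assume "C \<in> D1"
    then show "is_cycle H1 C" using cZ cycle_to_H1 cyc by (auto simp: D1_def Da_def)
  next
    fix C C' assume "C \<in> D1" "C' \<in> D1" "C \<noteq> C'"
    then show "C \<inter> C' = {}"
      using dsj disjZ x_ne unfolding D1_def Z1_def Da_def by auto
  next
    show "\<Union>D1 = edges H1"
    proof
      show "\<Union>D1 \<subseteq> edges H1" using edges_H1 by (auto simp: D1_def Z1_def Da_def)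
      show "edges H1 \<subseteq> \<Union>D1"
      proof
        fix f assume f: "f \<in> edges H1"
        show "f \<in> \<Union>D1"
        proof (cases "f = x")
          case True then show ?thesis by (auto simp: D1_def Z1_def)
        next
          case False
          then have fE: "f \<in> Ea" using f edges_H1 by auto
          then obtain C where C: "C \<in> D" "f \<in> C" using un Ea_sub by auto
          then have "C = Z \<or> C \<in> Da \<or> C \<in> Db" using Dsplit by auto
          then show ?thesis
          proof (elim disjE)
            assume "C = Z" then show ?thesis using C fE by (auto simp: D1_def Z1_def)
          next
            assume "C \<in> Da" then show ?thesis using C by (auto simp: D1_def)
          next
            assume "C \<in> Db" then show ?thesis using C fE Ea_Eb by (auto simp: Db_def)
          qed
        qed
      qed
    qed
  qed
  have d2: "D2 \<in> dec H2"
    unfolding dec_def cycle_decomp_def mem_Collect_eq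
  proof (intro conjI ballI impI)
    fix C assume "C \<in> D2"
    then show "is_cycle H2 C" using cZ cycle_to_H2 cyc by (auto simp: D2_def Db_def)
  next
    fix C C' assume C: "C \<in> D2" "C' \<in> D2" "C \<noteq> C'"
    have zz: "C \<inter> Z2 = {}" "Z2 \<inter> C = {}" if "C \<in> Db" for C
    proof -
      have "e \<notin> C" "x \<notin> C" using that e_notin x_ne by (auto simp: Db_def)
      moreover have "C \<inter> Z = {}" using disjZ that by blast
      ultimately show "C \<inter> Z2 = {}" "Z2 \<inter> C = {}" unfolding Z2_def by blast+
    qed
    have bb: "C \<inter> C' = {}" if "C \<in> Db" "C' \<in> Db" using dsj that C(3) unfolding Db_def by blast
    have "C = Z2 \<or> C \<in> Db" "C' = Z2 \<or> C' \<in> Db" using C unfolding D2_def by auto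
    then show "C \<inter> C' = {}" using zz bb C(3) by blast
  next
    show "\<Union>D2 = edges H2"
    proof
      show "\<Union>D2 \<subseteq> edges H2" using edges_H2 by (auto simp: D2_def Z2_def Db_def)
      show "edges H2 \<subseteq> \<Union>D2"
      proof
        fix f assume f: "f \<in> edges H2"
        show "f \<in> \<Union>D2"
        proof (cases "f = x \<or> f = e")
          case True then show ?thesis by (auto simp: D2_def Z2_def)
        next
          case False
          then have fE: "f \<in> Eb" using f edges_H2 by auto
          then obtain C where C: "C \<in> D" "f \<in> C" using un Eb_sub by auto
          then have "C = Z \<or> C \<in> Da \<or> C \<in> Db" using Dsplit by auto
          then show ?thesis
          proof (elim disjE)
            assume "C = Z" then show ?thesis using C fE by (auto simp: D2_def Z2_def)
          next
            assume "C \<in> Da" then show ?thesis using C fE Ea_Eb by (auto simp: Da_def)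
          next
            assume "C \<in> Db" then show ?thesis using C by (auto simp: D2_def)
          qed
        qed
      qed
    qed
  qed
  have "Z1 \<notin> Da" using x_ne by (auto simp: Z1_def Da_def)
  then have c1: "card D1 = card Da + 1" using finDa by (simp add: D1_def)
  have "Z2 \<notin> Db" using x_ne by (auto simp: Z2_def Db_def)
  then have c2: "card D2 = card Db + 1" using finDa by (simp add: D2_def)
  show ?thesis using d1 d2 c1 c2 cardD by (intro exI[of _ D1] exI[of _ D2]) simp
qed

lemma pieces_to_dec:
  assumes D1: "D1 \<in> dec H1" and D2: "D2 \<in> dec H2"
  shows "\<exists>D. D \<in> dec H \<and> card D + 1 = card D1 + card D2"
proof -
  have cyc1: "\<And>C. C \<in> D1 \<Longrightarrow> is_cycle H1 C" and dsj1: "\<And>C C'. C \<in> D1 \<Longrightarrow> C' \<in> D1 \<Longrightarrow> C \<noteq> C' \<Longrightarrow> C \<inter> C' = {}"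
    and un1: "\<Union>D1 = edges H1" using D1 by (auto simp: dec_def cycle_decomp_def)
  have cyc2: "\<And>C. C \<in> D2 \<Longrightarrow> is_cycle H2 C" and dsj2: "\<And>C C'. C \<in> D2 \<Longrightarrow> C' \<in> D2 \<Longrightarrow> C \<noteq> C' \<Longrightarrow> C \<inter> C' = {}"
    and un2: "\<Union>D2 = edges H2" using D2 by (auto simp: dec_def cycle_decomp_def)
  have fin1: "finite D1" using dec_elem_finite[OF finH1 D1] .
  have fin2: "finite D2" using dec_elem_finite[OF finH2 D2] .
  obtain Z1 where Z1: "Z1 \<in> D1" "x \<in> Z1" using un1 edges_H1 by auto
  obtain Z2 where Z2: "Z2 \<in> D2" "x \<in> Z2" using un2 edges_H2 by auto
  have comb: "e \<in> Z2 \<and> is_cycle H ((Z1 - {x}) \<union> (Z2 - {x}))"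
    using cycle_combine[OF cyc1[OF Z1(1)] Z1(2) cyc2[OF Z2(1)] Z2(2)] .
  define Z where "Z = (Z1 - {x}) \<union> (Z2 - {x})"
  define D1' where "D1' = D1 - {Z1}"
  define D2' where "D2' = D2 - {Z2}"
  have o1: "is_cycle H C \<and> C \<subseteq> Ea" if "C \<in> D1'" for C
  proof -
    have "x \<notin> C" using dsj1[of C Z1] that Z1 by (auto simp: D1'_def)
    then show ?thesis using cycle_H1_nox cyc1 that by (auto simp: D1'_def)
  qed
  have o2: "is_cycle H C \<and> C \<subseteq> Eb" if "C \<in> D2'" for C
  proof -
    have "x \<notin> C" "e \<notin> C" using dsj2[of C Z2] that Z2 comb by (auto simp: D2'_def)
    then show ?thesis using cycle_H2_nox cyc2 that by (auto simp: D2'_def)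
  qed
  have Z1s: "Z1 - {x} \<subseteq> Ea" using is_cycle_sub[OF cyc1[OF Z1(1)]] edges_H1 by auto
  have Z2s: "Z2 - {x} \<subseteq> insert e Eb" using is_cycle_sub[OF cyc2[OF Z2(1)]] edges_H2 by auto
  define D where "D = insert Z (D1' \<union> D2')"
  have neC: "C \<noteq> {}" if "C \<in> D1' \<union> D2'" for C using o1 o2 that is_cycle_ne by blast
  have eZ: "e \<in> Z" using comb x_ne unfolding Z_def by auto
  have ZnD: "Z \<notin> D1' \<union> D2'" using eZ o1 o2 e_notin by blast
  have D12: "D1' \<inter> D2' = {}"
  proof -
    have False if "C \<in> D1'" "C \<in> D2'" for C
      using o1[OF that(1)] o2[OF that(2)] neC that Ea_Eb by blast
    then show ?thesis by auto
  qed
  have dD: "D \<in> dec H"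
    unfolding dec_def cycle_decomp_def mem_Collect_eq
  proof (intro conjI ballI impI)
    fix C assume "C \<in> D"
    then show "is_cycle H C" using o1 o2 comb unfolding D_def Z_def by auto
  next
    fix C C' assume C: "C \<in> D" "C' \<in> D" "C \<noteq> C'"
    have dZ1: "C \<inter> Z = {}" if "C \<in> D1'" for C
    proof -
      have "C \<inter> Z1 = {}" using dsj1[of C Z1] that Z1 by (auto simp: D1'_def)
      moreover have "C \<inter> (Z2 - {x}) = {}" using o1[OF that] Z2s Ea_Eb e_notin by blast
      ultimately show ?thesis unfolding Z_def by blast
    qed
    have dZ2: "C \<inter> Z = {}" if "C \<in> D2'" for C
    proof -
      have "C \<inter> Z2 = {}" using dsj2[of C Z2] that Z2 by (auto simp: D2'_def)
      moreover have "C \<inter> (Z1 - {x}) = {}" using o2[OF that] Z1s Ea_Eb by blast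
      ultimately show ?thesis unfolding Z_def by blast
    qed
    have d12: "C \<inter> C' = {}" if "C \<in> D1'" "C' \<in> D2'" for C C'
      using o1[OF that(1)] o2[OF that(2)] Ea_Eb by blast
    have m: "C = Z \<or> C \<in> D1' \<or> C \<in> D2'" "C' = Z \<or> C' \<in> D1' \<or> C' \<in> D2'"
      using C(1,2) unfolding D_def by auto
    have s1: "C \<inter> C' = {}" if "C \<in> D1'" "C' \<in> D1'" using dsj1 that C(3) unfolding D1'_def by blast
    have s2: "C \<inter> C' = {}" if "C \<in> D2'" "C' \<in> D2'" using dsj2 that C(3) unfolding D2'_def by blast
    have d21: "C \<inter> C' = {}" if "C \<in> D2'" "C' \<in> D1'" for C C' using d12[OF that(2,1)] by blast
    have z1: "Z \<inter> C = {}" if "C \<in> D1'" for C using dZ1[OF that] by blast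
    have z2: "Z \<inter> C = {}" if "C \<in> D2'" for C using dZ2[OF that] by blast
    from m(1) show "C \<inter> C' = {}"
    proof (elim disjE)
      assume "C = Z"
      then show ?thesis using m(2) C(3) z1 z2 by metis
    next
      assume a1: "C \<in> D1'"
      from m(2) show ?thesis
      proof (elim disjE)
        assume "C' = Z" then show ?thesis using dZ1[OF a1] by simp
      next
        assume "C' \<in> D1'" then show ?thesis using s1 a1 by simp
      next
        assume "C' \<in> D2'" then show ?thesis using d12 a1 by simp
      qed
    next
      assume a2: "C \<in> D2'"
      from m(2) show ?thesis
      proof (elim disjE)
        assume "C' = Z" then show ?thesis using dZ2[OF a2] by simp
      next
        assume "C' \<in> D1'" then show ?thesis using d21 a2 by simp
      next
        assume "C' \<in> D2'" then show ?thesis using s2 a2 by simp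
      qed
    qed
  next
    show "\<Union>D = edges H"
    proof
      show "\<Union>D \<subseteq> edges H" using o1 o2 comb is_cycle_sub unfolding D_def Z_def by blast
      show "edges H \<subseteq> \<Union>D"
      proof
        fix f assume f: "f \<in> edges H"
        then have "f = e \<or> f \<in> Ea \<or> f \<in> Eb" using edges_split by auto
        then show "f \<in> \<Union>D"
        proof (elim disjE)
          assume "f = e" then show ?thesis using eZ by (auto simp: D_def)
        next
          assume fa: "f \<in> Ea"
          then obtain C where "C \<in> D1" "f \<in> C" using un1 edges_H1 by auto
          then show ?thesis using fa x_ne unfolding D_def D1'_def Z_def by (cases "C = Z1") auto
        next
          assume fb: "f \<in> Eb"
          then obtain C where "C \<in> D2" "f \<in> C" using un2 edges_H2 by auto
          then show ?thesis using fb x_ne unfolding D_def D2'_def Z_def by (cases "C = Z2") auto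
        qed
      qed
    qed
  qed
  have "card D = card D1' + card D2' + 1"
    using ZnD D12 fin1 fin2 unfolding D_def D1'_def D2'_def by (simp add: card_Un_disjoint)
  moreover have "card D1' + 1 = card D1" using Z1 fin1 unfolding D1'_def
    by (metis Suc_eq_plus1 card_Suc_Diff1)
  moreover have "card D2' + 1 = card D2" using Z2 fin2 unfolding D2'_def
    by (metis Suc_eq_plus1 card_Suc_Diff1)
  ultimately show ?thesis using dD by (intro exI[of _ D]) simp
qed

lemma split_counts:
  assumes "dec H \<noteq> {}"
  shows "dec H1 \<noteq> {}" "dec H2 \<noteq> {}" "cmin H + 1 = cmin H1 + cmin H2" "nu H + 1 = nu H1 + nu H2"
proof -
  obtain D where D: "D \<in> dec H" using assms by auto
  then show n1: "dec H1 \<noteq> {}" and n2: "dec H2 \<noteq> {}" using dec_to_pieces by blast+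
  obtain Dm where Dm: "Dm \<in> dec H" "card Dm = cmin H" using cmin_ex[OF finE assms] by blast
  obtain D1m where D1m: "D1m \<in> dec H1" "card D1m = cmin H1" using cmin_ex[OF finH1 n1] by blast
  obtain D2m where D2m: "D2m \<in> dec H2" "card D2m = cmin H2" using cmin_ex[OF finH2 n2] by blast
  obtain A1 A2 where A: "A1 \<in> dec H1" "A2 \<in> dec H2" "card A1 + card A2 = card Dm + 1"
    using dec_to_pieces[OF Dm(1)] by blast
  obtain B where B: "B \<in> dec H" "card B + 1 = card D1m + card D2m"
    using pieces_to_dec[OF D1m(1) D2m(1)] by blast
  have "cmin H1 \<le> card A1" "cmin H2 \<le> card A2" using cmin_le finH1 finH2 A by auto
  moreover have "cmin H \<le> card B" using cmin_le[OF finE B(1)] .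
  ultimately show "cmin H + 1 = cmin H1 + cmin H2" using A B Dm D1m D2m by linarith
  obtain Dx where Dx: "Dx \<in> dec H" "card Dx = nu H" using nu_ex[OF finE assms] by blast
  obtain D1x where D1x: "D1x \<in> dec H1" "card D1x = nu H1" using nu_ex[OF finH1 n1] by blast
  obtain D2x where D2x: "D2x \<in> dec H2" "card D2x = nu H2" using nu_ex[OF finH2 n2] by blast
  obtain A1' A2' where A': "A1' \<in> dec H1" "A2' \<in> dec H2" "card A1' + card A2' = card Dx + 1"
    using dec_to_pieces[OF Dx(1)] by blast
  obtain B' where B': "B' \<in> dec H" "card B' + 1 = card D1x + card D2x"
    using pieces_to_dec[OF D1x(1) D2x(1)] by blast
  have "card A1' \<le> nu H1" "card A2' \<le> nu H2" using nu_ge finH1 finH2 A' by auto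
  moreover have "card B' \<le> nu H" using nu_ge[OF finE B'(1)] .
  ultimately show "nu H + 1 = nu H1 + nu H2" using A' B' Dx D1x D2x by linarith
qed

end


lemma mod_prev:
  assumes "i < (n::nat)"
  shows "((i + n - 1) mod n + 1) mod n = i"
proof (cases i)
  case 0
  then have "(i + n - 1) mod n = n - 1" using assms by simp
  then show ?thesis using assms 0 by simp
next
  case (Suc k)
  then have "(i + n - 1) mod n = k" using assms by (simp add: add.commute)
  then show ?thesis using assms Suc by simp
qed

lemma mod_prev2:
  assumes "j < (n::nat)" "i = (j + 1) mod n"
  shows "j = (i + n - 1) mod n"
proof (cases "j + 1 < n")
  case True
  then have "i = j + 1" using assms by simp
  then show ?thesis using assms by simp
next
  case False
  then have "j = n - 1" using assms by simp
  then have "i = 0" using assms by simp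
  then show ?thesis using \<open>j = n - 1\<close> assms by simp
qed

lemma cyc_inc_two:
  assumes "cyc H vs es" "v \<in> set vs"
  shows "\<exists>f g. f \<noteq> g \<and> f \<in> set es \<and> g \<in> set es \<and> v \<in> ends H f \<and> v \<in> ends H g"
proof -
  let ?n = "length es"
  have l: "length vs = ?n" "2 \<le> ?n" and d: "distinct es" using assms(1) by (auto simp: cyc_def)
  have E: "\<And>i. i < ?n \<Longrightarrow> ends H (es ! i) = {vs ! i, vs ! ((i + 1) mod ?n)}"
    using assms(1) by (auto simp: cyc_def)
  obtain i where i: "i < ?n" "vs ! i = v" using assms(2) l by (auto simp: in_set_conv_nth)
  define j where "j = (i + ?n - 1) mod ?n"
  have pos: "0 < ?n" using l by linarith
  have j: "j < ?n" unfolding j_def using pos by simp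
  have ji: "(j + 1) mod ?n = i" unfolding j_def using mod_prev[OF i(1)] .
  have jne: "j \<noteq> i"
  proof
    assume "j = i"
    then have "(i + 1) mod ?n = i" using ji by simp
    show False
    proof (cases "i + 1 < ?n")
      case True
      then show False using \<open>(i + 1) mod ?n = i\<close> by simp
    next
      case False
      then have "i + 1 = ?n" using i by simp
      then show False using \<open>(i + 1) mod ?n = i\<close> l by simp
    qed
  qed
  have "es ! i \<noteq> es ! j" using d i j jne nth_eq_iff_index_eq by metis
  moreover have "v \<in> ends H (es ! i)" using E[OF i(1)] i by simp
  moreover have "v \<in> ends H (es ! j)" using E[OF j] ji i by simp
  ultimately show ?thesis using i j by (intro exI[of _ "es ! i"] exI[of _ "es ! j"]) auto
qed

lemma cyc_inc_le2:
  assumes "cyc H vs es"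
  shows "card {f \<in> set es. v \<in> ends H f} \<le> 2"
proof (cases "v \<in> set vs")
  case False
  have "{f \<in> set es. v \<in> ends H f} = {}" using cyc_ends_sub[OF assms] False by blast
  then show ?thesis by (simp only: card.empty)
next
  case True
  let ?n = "length es"
  have l: "length vs = ?n" "2 \<le> ?n" and d: "distinct vs" using assms(1) by (auto simp: cyc_def)
  have E: "\<And>i. i < ?n \<Longrightarrow> ends H (es ! i) = {vs ! i, vs ! ((i + 1) mod ?n)}"
    using assms(1) by (auto simp: cyc_def)
  obtain i where i: "i < ?n" "vs ! i = v" using True l by (auto simp: in_set_conv_nth)
  have pos: "0 < ?n" using l by linarith
  have "{f \<in> set es. v \<in> ends H f} \<subseteq> {es ! i, es ! ((i + ?n - 1) mod ?n)}"
  proof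
    fix f assume "f \<in> {f \<in> set es. v \<in> ends H f}"
    then obtain j where j: "j < ?n" "es ! j = f" "v \<in> ends H f" by (auto simp: in_set_conv_nth)
    then have "vs ! i = vs ! j \<or> vs ! i = vs ! ((j + 1) mod ?n)" using E[OF j(1)] i by auto
    then have "i = j \<or> i = (j + 1) mod ?n"
      using d i j l pos nth_eq_iff_index_eq by (metis mod_less_divisor)
    then have "j = i \<or> j = (i + ?n - 1) mod ?n" using mod_prev2[OF j(1)] by blast
    then show "f \<in> {es ! i, es ! ((i + ?n - 1) mod ?n)}" using j by auto
  qed
  moreover have "card {es ! i, es ! ((i + ?n - 1) mod ?n)} \<le> 2" by (simp add: card_insert_if)
  ultimately show ?thesis by (meson card_mono finite.emptyI finite.insertI le_trans)
qed

lemma cycle_graph_sub_cycle: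
  assumes A: "is_cycle_graph A" and C: "is_cycle A C"
  shows "C = edges A"
proof -
  obtain vs0 es0 where c0: "cyc A vs0 es0" "set es0 = edges A"
    using A unfolding is_cycle_graph_def is_cycle_cyc by blast
  obtain vs es where c: "cyc A vs es" "set es = C" using C unfolding is_cycle_cyc by blast
  let ?n = "length es0"
  have l0: "length vs0 = ?n" "2 \<le> ?n" using c0(1) by (auto simp: cyc_def)
  have pos: "0 < ?n" using l0 by linarith
  have E0: "\<And>i. i < ?n \<Longrightarrow> ends A (es0 ! i) = {vs0 ! i, vs0 ! ((i + 1) mod ?n)}"
    using c0(1) by (auto simp: cyc_def)
  have Csub: "C \<subseteq> edges A" using is_cycle_sub[OF C] .
  have closedC: "g \<in> C" if f: "f \<in> C" and vf: "v \<in> ends A f" and g: "g \<in> edges A" and vg: "v \<in> ends A g" for f g v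
  proof -
    have vv: "v \<in> set vs" using cyc_ends_sub[OF c(1)] f vf c(2) by auto
    obtain f1 g1 where fg: "f1 \<noteq> g1" "f1 \<in> C" "g1 \<in> C" "v \<in> ends A f1" "v \<in> ends A g1"
      using cyc_inc_two[OF c(1) vv] c(2) by blast
    let ?S = "{h \<in> set es0. v \<in> ends A h}"
    have "{f1, g1} \<subseteq> {h \<in> C. v \<in> ends A h}" using fg by auto
    moreover have "{h \<in> C. v \<in> ends A h} \<subseteq> ?S" using Csub c0(2) by auto
    ultimately have sub: "{f1, g1} \<subseteq> ?S" by blast
    have "card ?S \<le> 2" using cyc_inc_le2[OF c0(1)] .
    moreover have "card {f1, g1} = 2" using fg by simp
    moreover have "finite ?S" by simp
    ultimately have "{f1, g1} = ?S" using sub by (metis card_seteq)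
    moreover have "g \<in> ?S" using g vg c0(2) by auto
    ultimately show "g \<in> C" using fg by auto
  qed
  obtain f0 where f0: "f0 \<in> C" using is_cycle_ne[OF C] by auto
  then have "f0 \<in> set es0" using Csub c0(2) by auto
  then obtain j0 where j0: "j0 < ?n" "es0 ! j0 = f0" by (auto simp: in_set_conv_nth)
  have step: "es0 ! ((j + 1) mod ?n) \<in> C" if "j < ?n" "es0 ! j \<in> C" for j
  proof (rule closedC[OF that(2)])
    show "vs0 ! ((j + 1) mod ?n) \<in> ends A (es0 ! j)" using E0[OF that(1)] by simp
    show "es0 ! ((j + 1) mod ?n) \<in> edges A" using c0(2) pos by (metis mod_less_divisor nth_mem)
    have "(j + 1) mod ?n < ?n" using pos by simp
    then show "vs0 ! ((j + 1) mod ?n) \<in> ends A (es0 ! ((j + 1) mod ?n))" using E0 by simp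
  qed
  have all: "es0 ! ((j0 + d) mod ?n) \<in> C" for d
  proof (induction d)
    case 0 then show ?case using j0 f0 by simp
  next
    case (Suc d)
    have "es0 ! (((j0 + d) mod ?n + 1) mod ?n) \<in> C" using step[OF _ Suc] pos by simp
    moreover have "((j0 + d) mod ?n + 1) mod ?n = (j0 + Suc d) mod ?n" by (simp add: mod_Suc_eq)
    ultimately show ?case by simp
  qed
  have "edges A \<subseteq> C"
  proof
    fix f assume "f \<in> edges A"
    then have "f \<in> set es0" using c0(2) by simp
    then obtain j where j: "j < ?n" "es0 ! j = f" by (auto simp: in_set_conv_nth)
    have "(j0 + (j + ?n - j0)) mod ?n = j" using j j0 by simp
    then show "f \<in> C" using all[of "j + ?n - j0"] j by simp
  qed
  then show ?thesis using Csub by auto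
qed

lemma cycle_graph_dec:
  assumes A: "is_cycle_graph A"
  shows "dec A = {{edges A}}"
proof -
  have cA: "is_cycle A (edges A)" using A by (simp add: is_cycle_graph_def)
  have "{edges A} \<in> dec A" using cA by (simp add: dec_def cycle_decomp_def)
  moreover have "D = {edges A}" if D: "D \<in> dec A" for D
  proof -
    have cy: "\<And>C. C \<in> D \<Longrightarrow> C = edges A"
      using D cycle_graph_sub_cycle[OF A] by (auto simp: dec_def cycle_decomp_def)
    have "\<Union>D = edges A" using D by (simp add: dec_def cycle_decomp_def)
    moreover have "edges A \<noteq> {}" using is_cycle_ne[OF cA] .
    ultimately have "D \<noteq> {}" by auto
    then show ?thesis using cy by auto
  qed
  ultimately show ?thesis by blast
qed

lemma cycle_graph_cmin: "is_cycle_graph A \<Longrightarrow> cmin A = 1"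
  unfolding cmin_def dec_def[symmetric] by (simp add: cycle_graph_dec)

lemma cycle_graph_nu: "is_cycle_graph A \<Longrightarrow> nu A = 1"
  unfolding nu_def dec_def[symmetric] by (simp add: cycle_graph_dec)


lemma gpath_ends_union:
  assumes "gpath H vs es" "es \<noteq> []"
  shows "\<Union>(ends H ` set es) = set vs"
proof
  show "\<Union>(ends H ` set es) \<subseteq> set vs"
  proof
    fix v assume "v \<in> \<Union>(ends H ` set es)"
    then obtain i where i: "i < length es" "v \<in> ends H (es ! i)" by (auto simp: in_set_conv_nth)
    then show "v \<in> set vs" using assms(1) by (auto simp: gpath_def)
  qed
  show "set vs \<subseteq> \<Union>(ends H ` set es)" using gpath_vertex[OF assms] by blast
qed

lemma wf_glue:
  assumes "wf_graph A" "wf_graph B"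
  shows "wf_graph (glue A B x)"
  using assms unfolding wf_graph_def glue_def by auto

lemma glue_cycle_graph:
  assumes A: "is_cycle_graph A" and B: "is_cycle_graph B" and xA: "x \<in> edges A" and xB: "x \<in> edges B"
    and eAB: "edges A \<inter> edges B = {x}" and endx: "ends A x = ends B x"
    and vAB: "verts A \<inter> verts B \<subseteq> ends A x"
  shows "is_cycle_graph (glue A B x)"
proof -
  define G where "G = glue A B x"
  have vG: "verts G = verts A \<union> verts B" and eG: "edges G = (edges A \<union> edges B) - {x}"
    and nG: "\<And>f. ends G f = (if f \<in> edges A then ends A f else ends B f)"
    unfolding G_def glue_def by auto
  have cA: "is_cycle A (edges A)" and cB: "is_cycle B (edges B)"
    using A B by (auto simp: is_cycle_graph_def)
  obtain vs1 es1 where cl1: "closed A vs1 es1 x" and EA: "edges A = insert x (set es1)"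
    using is_cycle_closed[OF cA xA] by blast
  define p where "p = hd vs1"
  define q where "q = last vs1"
  have g1: "gpath A vs1 es1" and ne1: "es1 \<noteq> []" and xn1: "x \<notin> set es1" and ex: "ends A x = {q, p}"
    using cl1 unfolding closed_def p_def q_def by auto
  obtain vs0 es0 where cl0: "closed B vs0 es0 x" "edges B = insert x (set es0)"
    using is_cycle_closed[OF cB xB] by blast
  have exB: "ends B x = {q, p}" using ex endx by simp
  obtain vs2 es2 where cl2: "closed B vs2 es2 x" and EB: "edges B = insert x (set es2)"
    and h2: "hd vs2 = q" and l2: "last vs2 = p"
    using closed_orient[OF cl0(1) exB] cl0(2) by blast
  have g2: "gpath B vs2 es2" and ne2: "es2 \<noteq> []" and xn2: "x \<notin> set es2"
    using cl2 unfolding closed_def by auto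
  let ?m = "length es2"
  have lv2: "length vs2 = Suc ?m" and dv2: "distinct vs2" and de2: "distinct es2"
    using g2 by (auto simp: gpath_def)
  have m0: "0 < ?m" using ne2 by simp
  define vs2' where "vs2' = take ?m vs2"
  define es2' where "es2' = take (?m - 1) es2"
  define g where "g = es2 ! (?m - 1)"
  have g2': "gpath B vs2' es2'" using gpath_take[OF g2, of "?m - 1"] m0
    unfolding vs2'_def es2'_def by simp
  have es2_dec: "es2 = es2' @ [g]"
  proof -
    have "take (Suc (?m - 1)) es2 = take (?m - 1) es2 @ [es2 ! (?m - 1)]"
      using m0 by (intro take_Suc_conv_app_nth) simp
    then show ?thesis using m0 unfolding es2'_def g_def by simp
  qed
  have lvs2': "length vs2' = Suc (?m - 1)" using m0 lv2 unfolding vs2'_def by simp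
  have last2': "last vs2' = vs2 ! (?m - 1)"
    using last_len_nth[OF lvs2'] m0 unfolding vs2'_def by simp
  have hd2': "hd vs2' = q" using h2 m0 lv2 unfolding vs2'_def by (cases vs2) auto
  have eg: "ends B g = {last vs2', p}"
  proof -
    have "ends B (es2 ! (?m - 1)) = {vs2 ! (?m - 1), vs2 ! Suc (?m - 1)}" using g2 m0 by (simp add: gpath_def)
    moreover have "vs2 ! Suc (?m - 1) = p" using l2 lv2 m0 by (simp add: last_len_nth)
    ultimately show ?thesis using last2' unfolding g_def by simp
  qed
  have gB: "g \<in> edges B" "g \<noteq> x" using EB es2_dec xn2 by auto
  have gnA: "g \<notin> edges A" using gB eAB by auto
  have es1A: "set es1 \<subseteq> edges A - {x}" using EA xn1 by auto
  have es2'B: "set es2' \<subseteq> edges B - {x}" using EB xn2 es2_dec by auto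
  have es2'nA: "set es2' \<inter> edges A = {}" using es2'B eAB by auto
  have gG1: "gpath G vs1 es1"
  proof (rule gpath_mono[OF g1])
    show "set es1 \<subseteq> edges G" using es1A eG by auto
    show "\<forall>f\<in>set es1. ends G f = ends A f" using es1A nG by auto
  qed
  have gG2: "gpath G vs2' es2'"
  proof (rule gpath_mono[OF g2'])
    show "set es2' \<subseteq> edges G" using es2'B eG by auto
    show "\<forall>f\<in>set es2'. ends G f = ends B f" using es2'nA nG by auto
  qed
  have VA: "verts A = set vs1"
  proof -
    have "verts A = \<Union>(ends A ` edges A)" using A by (simp add: is_cycle_graph_def)
    also have "\<dots> = ends A x \<union> \<Union>(ends A ` set es1)" using EA by auto
    also have "\<Union>(ends A ` set es1) = set vs1" using gpath_ends_union[OF g1 ne1] .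
    also have "ends A x \<subseteq> set vs1" using ex g1 unfolding p_def q_def
      by (cases vs1) (auto simp: gpath_def)
    then have "ends A x \<union> set vs1 = set vs1" by auto
    finally show ?thesis .
  qed
  have VB: "verts B = set vs2"
  proof -
    have "verts B = \<Union>(ends B ` edges B)" using B by (simp add: is_cycle_graph_def)
    also have "\<dots> = ends B x \<union> \<Union>(ends B ` set es2)" using EB by auto
    also have "\<Union>(ends B ` set es2) = set vs2" using gpath_ends_union[OF g2 ne2] .
    also have "ends B x \<subseteq> set vs2" using ex endx h2 l2 lv2
      by (cases vs2) auto
    then have "ends B x \<union> set vs2 = set vs2" by auto
    finally show ?thesis .
  qed
  have vs2_dec: "vs2 = vs2' @ [p]"
  proof -
    have "take (Suc ?m) vs2 = take ?m vs2 @ [vs2 ! ?m]" using lv2 by (intro take_Suc_conv_app_nth) simp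
    moreover have "vs2 ! ?m = p" using l2 lv2 by (simp add: last_len_nth)
    ultimately show ?thesis using lv2 unfolding vs2'_def by simp
  qed
  have tl_disj: "set vs1 \<inter> set (tl vs2') = {}"
  proof -
    have "v \<notin> set vs1" if v: "v \<in> set (tl vs2')" for v
    proof
      assume v1: "v \<in> set vs1"
      have dv2': "distinct vs2'" using g2' by (simp add: gpath_def)
      have vs2'c: "vs2' = q # tl vs2'" using hd2' lvs2' by (cases vs2') auto
      have "v \<noteq> q" using v dv2' vs2'c by (metis distinct.simps(2))
      moreover have "v \<noteq> p"
      proof
        assume "v = p"
        then have "p \<in> set vs2'" using v by (cases vs2') auto
        then show False using dv2 vs2_dec by simp
      qed
      moreover have "v \<in> verts B"
      proof -
        have "v \<in> set vs2'" using v by (cases vs2') auto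
        then show ?thesis using VB vs2_dec by simp
      qed
      ultimately show False using v1 VA vAB ex by auto
    qed
    then show ?thesis by blast
  qed
  have gc: "gpath G (vs1 @ tl vs2') (es1 @ es2')"
  proof (rule gpath_append[OF gG1 gG2])
    show "last vs1 = hd vs2'" using hd2' q_def by simp
    show "set vs1 \<inter> set (tl vs2') = {}" using tl_disj .
    show "set es1 \<inter> set es2' = {}" using es1A es2'nA by auto
  qed
  have lastc: "last (vs1 @ tl vs2') = last vs2'"
  proof (cases "tl vs2' = []")
    case True
    then have "vs2' = [q]" using hd2' lvs2' by (cases vs2') auto
    then show ?thesis using True q_def by simp
  next
    case False
    then show ?thesis by (simp add: last_tl)
  qed
  have hdc: "hd (vs1 @ tl vs2') = p" using g1 unfolding p_def by (cases vs1) (auto simp: gpath_def)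
  have ccl: "closed G (vs1 @ tl vs2') (es1 @ es2') g"
    unfolding closed_def
  proof (intro conjI)
    show "gpath G (vs1 @ tl vs2') (es1 @ es2')" using gc .
    show "es1 @ es2' \<noteq> []" using ne1 by simp
    show "g \<in> edges G" using gB eG by auto
    show "g \<notin> set (es1 @ es2')" using gnA es1A de2 es2_dec by auto
    show "ends G g = {last (vs1 @ tl vs2'), hd (vs1 @ tl vs2')}" using nG gnA eg lastc hdc by simp
  qed
  have EG: "insert g (set (es1 @ es2')) = edges G" using eG EA EB es2_dec xn1 xn2 by auto
  have cG: "is_cycle G (edges G)" using closed_is_cycle[OF ccl] EG by simp
  have "\<Union>(ends G ` edges G) = \<Union>(ends G ` set es1) \<union> \<Union>(ends G ` set es2)"
    using eG EA EB xn1 xn2 by auto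
  also have "\<Union>(ends G ` set es1) = \<Union>(ends A ` set es1)" using es1A nG by auto
  also have "\<Union>(ends G ` set es2) = \<Union>(ends B ` set es2)"
  proof -
    have "set es2 \<inter> edges A = {}" using EB xn2 eAB by auto
    then show ?thesis using nG by auto
  qed
  also have "\<Union>(ends A ` set es1) \<union> \<Union>(ends B ` set es2) = verts G"
    using gpath_ends_union[OF g1 ne1] gpath_ends_union[OF g2 ne2] VA VB vG by simp
  finally have "verts G = \<Union>(ends G ` edges G)" by simp
  then show ?thesis using cG unfolding is_cycle_graph_def G_def by simp
qed


lemma cycle_inc_even:
  assumes "is_cycle G C"
  shows "even (card {f \<in> C. v \<in> ends G f})"
proof -
  obtain vs es where c: "cyc G vs es" "set es = C" using assms unfolding is_cycle_cyc by blast
  show ?thesis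
  proof (cases "v \<in> set vs")
    case False
    have "{f \<in> C. v \<in> ends G f} = {}" using cyc_ends_sub[OF c(1)] False c(2) by blast
    then show ?thesis by (simp only: card.empty) simp
  next
    case True
    obtain f g where fg: "f \<noteq> g" "f \<in> set es" "g \<in> set es" "v \<in> ends G f" "v \<in> ends G g"
      using cyc_inc_two[OF c(1) True] by blast
    have le: "card {f \<in> C. v \<in> ends G f} \<le> 2" using cyc_inc_le2[OF c(1)] c(2) by simp
    have "{f, g} \<subseteq> {f \<in> C. v \<in> ends G f}" using fg c(2) by auto
    then have "card {f, g} \<le> card {f \<in> C. v \<in> ends G f}"
      using c(2) by (intro card_mono) auto
    then have "card {f \<in> C. v \<in> ends G f} = 2" using le fg by simp
    then show ?thesis by simp
  qed
qed

lemma find_cycle: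
  assumes wf: "wf_graph G" and eu: "eulerian G" and ne: "edges G \<noteq> {}"
  shows "\<exists>C. is_cycle G C"
proof -
  define P where "P = (\<lambda>(vs, es). gpath G vs es \<and> es \<noteq> [])"
  obtain f0 where f0: "f0 \<in> edges G" using ne by auto
  obtain u w where uw: "ends G f0 = {u, w}" "u \<noteq> w"
    using wf f0 card2_obtain unfolding wf_graph_def by metis
  have P0: "P ([u, w], [f0])" using uw f0 unfolding P_def gpath_def by auto
  have finE: "finite (edges G)" using wf by (simp add: wf_graph_def)
  have bound: "\<forall>y. P y \<longrightarrow> (\<lambda>(vs, es). length es) y < Suc (card (edges G))"
  proof (intro allI impI)
    fix y assume "P y"
    then obtain vs es where y: "y = (vs, es)" "gpath G vs es" by (auto simp: P_def split: prod.splits)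
    then have "length es = card (set es)" "set es \<subseteq> edges G" by (auto simp: gpath_def distinct_card)
    then have "length es \<le> card (edges G)" using card_mono[OF finE] by simp
    then show "(\<lambda>(vs, es). length es) y < Suc (card (edges G))" using y by simp
  qed
  obtain y where y: "P y" "\<forall>z. P z \<longrightarrow> (\<lambda>(vs, es). length es) z \<le> (\<lambda>(vs, es). length es) y"
    using ex_has_greatest_nat[OF P0 bound] by blast
  obtain vs es where yy: "y = (vs, es)" by (cases y)
  have g: "gpath G vs es" and nes: "es \<noteq> []" using y(1) yy by (auto simp: P_def)
  have maxl: "\<And>vs' es'. gpath G vs' es' \<Longrightarrow> es' \<noteq> [] \<Longrightarrow> length es' \<le> length es"
    using y(2) yy unfolding P_def by fastforce
  let ?m = "length es"
  have lv: "length vs = Suc ?m" and dv: "distinct vs" and de: "distinct es" using g by (auto simp: gpath_def)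
  have m0: "0 < ?m" using nes by simp
  define v where "v = last vs"
  have vm: "vs ! ?m = v" using lv unfolding v_def by (simp add: last_len_nth)
  define l where "l = es ! (?m - 1)"
  have lE: "l \<in> edges G" using g m0 unfolding l_def gpath_def by auto
  have el: "ends G l = {vs ! (?m - 1), v}"
  proof -
    have "ends G (es ! (?m - 1)) = {vs ! (?m - 1), vs ! Suc (?m - 1)}" using g m0 by (simp add: gpath_def)
    then show ?thesis using m0 vm unfolding l_def by simp
  qed
  have vV: "v \<in> verts G" using wf lE el unfolding wf_graph_def by auto
  let ?I = "{f \<in> edges G. v \<in> ends G f}"
  have evI: "even (card ?I)" using eu vV unfolding eulerian_def degree_def by auto
  have lI: "l \<in> ?I" using lE el by auto
  have finI: "finite ?I" using finE by simp
  have "?I - {l} \<noteq> {}"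
  proof
    assume "?I - {l} = {}"
    then have "?I = {l}" using lI by auto
    then show False using evI by simp
  qed
  then obtain g0 where g0: "g0 \<in> edges G" "v \<in> ends G g0" "g0 \<noteq> l" by auto
  have g0n: "g0 \<notin> set es"
  proof
    assume "g0 \<in> set es"
    then obtain i where i: "i < ?m" "es ! i = g0" by (auto simp: in_set_conv_nth)
    have "ends G g0 = {vs ! i, vs ! Suc i}" using g i by (auto simp: gpath_def)
    then have "vs ! ?m = vs ! i \<or> vs ! ?m = vs ! Suc i" using g0(2) vm by auto
    moreover have "?m < length vs" "i < length vs" "Suc i < length vs" using lv i by auto
    ultimately have "?m = i \<or> ?m = Suc i" using nth_eq_iff_index_eq[OF dv] by metis
    then have "i = ?m - 1" using i by auto
    then show False using i g0(3) unfolding l_def by simp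
  qed
  obtain w where w: "ends G g0 = {v, w}" "v \<noteq> w"
  proof -
    obtain p q where pq: "ends G g0 = {p, q}" "p \<noteq> q" using wf g0(1) card2_obtain unfolding wf_graph_def by metis
    then show ?thesis using g0(2) that by (auto simp: insert_commute)
  qed
  have "w \<in> set vs"
  proof (rule ccontr)
    assume wn: "w \<notin> set vs"
    have gvw: "gpath G [v, w] [g0]" using w g0 unfolding gpath_def by auto
    have "gpath G (vs @ tl [v, w]) (es @ [g0])"
    proof (rule gpath_append[OF g gvw])
      show "last vs = hd [v, w]" unfolding v_def by simp
      show "set vs \<inter> set (tl [v, w]) = {}" using wn by simp
      show "set es \<inter> set [g0] = {}" using g0n by simp
    qed
    then have "length (es @ [g0]) \<le> ?m" using maxl by blast
    then show False by simp
  qed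
  then obtain j where j: "j < length vs" "vs ! j = w" by (auto simp: in_set_conv_nth)
  have jm: "j < ?m" using j vm w lv by (cases "j = ?m") auto
  have cl: "closed G (drop j vs) (drop j es) g0"
    unfolding closed_def
  proof (intro conjI)
    show "gpath G (drop j vs) (drop j es)" using gpath_drop[OF g] jm by simp
    show "drop j es \<noteq> []" using jm by simp
    show "g0 \<in> edges G" using g0 by simp
    show "g0 \<notin> set (drop j es)" using g0n by (auto dest: in_set_dropD)
    have "last (drop j vs) = v" using jm lv unfolding v_def by simp
    moreover have "hd (drop j vs) = w" using j by (simp add: hd_drop_conv_nth)
    ultimately show "ends G g0 = {last (drop j vs), hd (drop j vs)}" using w by simp
  qed
  then show ?thesis using closed_is_cycle[OF cl] by blast
qed

lemma eulerian_dec: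
  assumes "wf_graph G" "eulerian G"
  shows "dec G \<noteq> {}"
  using assms
proof (induction "card (edges G)" arbitrary: G rule: less_induct)
  case less
  show ?case
  proof (cases "edges G = {}")
    case True
    then have "{} \<in> dec G" by (simp add: dec_def cycle_decomp_def)
    then show ?thesis by blast
  next
    case False
    obtain C where C: "is_cycle G C" using find_cycle[OF less.prems False] by blast
    have Csub: "C \<subseteq> edges G" using is_cycle_sub[OF C] .
    have Cne: "C \<noteq> {}" using is_cycle_ne[OF C] .
    define G' where "G' = G\<lparr>edges := edges G - C\<rparr>"
    have finE: "finite (edges G)" using less.prems(1) by (simp add: wf_graph_def)
    have wf': "wf_graph G'" using less.prems(1) unfolding G'_def wf_graph_def by auto
    have eu': "eulerian G'"
      unfolding eulerian_def
    proof
      fix v assume "v \<in> verts G'"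
      then have vv: "v \<in> verts G" by (simp add: G'_def)
      have "{f \<in> edges G. v \<in> ends G f} = {f \<in> edges G - C. v \<in> ends G f} \<union> {f \<in> C. v \<in> ends G f}"
        using Csub by auto
      then have "degree G v = card {f \<in> edges G - C. v \<in> ends G f} + card {f \<in> C. v \<in> ends G f}"
      proof -
        have f1: "finite {f \<in> edges G - C. v \<in> ends G f}" using finE by simp
        have f2: "finite {f \<in> C. v \<in> ends G f}" using finE Csub by (auto intro: finite_subset)
        have d: "{f \<in> edges G - C. v \<in> ends G f} \<inter> {f \<in> C. v \<in> ends G f} = {}" by auto
        show ?thesis unfolding degree_def \<open>{f \<in> edges G. v \<in> ends G f} = _\<close>
          using card_Un_disjoint[OF f1 f2 d] .
      qed
      moreover have "even (degree G v)" using less.prems(2) vv by (simp add: eulerian_def)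
      moreover have "even (card {f \<in> C. v \<in> ends G f})" using cycle_inc_even[OF C] .
      ultimately have "even (card {f \<in> edges G - C. v \<in> ends G f})" by simp
      then show "even (degree G' v)" by (simp add: G'_def degree_def)
    qed
    have "card (edges G') < card (edges G)"
    proof -
      have "edges G - C \<subset> edges G" using Csub Cne by auto
      then show ?thesis unfolding G'_def using finE by (simp add: psubset_card_mono)
    qed
    then obtain D' where D': "D' \<in> dec G'" using less.hyps wf' eu' by blast
    define D where "D = insert C D'"
    have cD': "\<And>C'. C' \<in> D' \<Longrightarrow> is_cycle G C'"
    proof -
      fix C' assume "C' \<in> D'"
      then have c': "is_cycle G' C'" using D' by (simp add: dec_def cycle_decomp_def)
      show "is_cycle G C'"
        using is_cycle_mono[OF c'] is_cycle_sub[OF c'] unfolding G'_def by auto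
    qed
    have sD': "\<And>C'. C' \<in> D' \<Longrightarrow> C' \<subseteq> edges G - C"
      using D' unfolding dec_def cycle_decomp_def G'_def by auto
    have "D \<in> dec G"
      unfolding dec_def cycle_decomp_def mem_Collect_eq
    proof (intro conjI ballI impI)
      fix C' assume "C' \<in> D" then show "is_cycle G C'" using C cD' by (auto simp: D_def)
    next
      fix C1 C2 assume a: "C1 \<in> D" "C2 \<in> D" "C1 \<noteq> C2"
      have d0: "C1 \<inter> C2 = {}" if "C1 \<in> D'" "C2 \<in> D'" using D' that a(3)
        unfolding dec_def cycle_decomp_def by auto
      show "C1 \<inter> C2 = {}" using a d0 sD' unfolding D_def by blast
    next
      have "\<Union>D' = edges G - C" using D' unfolding dec_def cycle_decomp_def G'_def by auto
      then show "\<Union>D = edges G" using Csub unfolding D_def by auto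
    qed
    then show ?thesis by blast
  qed
qed


definition EE :: "('v, 'e) mgraph multiset \<Rightarrow> 'e set" where
  "EE L = \<Union>(edges ` set_mset L)"
definition VV :: "('v, 'e) mgraph multiset \<Rightarrow> 'v set" where
  "VV L = \<Union>(verts ` set_mset L)"
definition cnt :: "('v, 'e) mgraph multiset \<Rightarrow> 'e \<Rightarrow> nat" where
  "cnt L y = size (filter_mset (\<lambda>P. y \<in> edges P) L)"
definition wit :: "('v, 'e) mgraph multiset \<Rightarrow> 'e \<Rightarrow> 'v \<Rightarrow> bool" where
  "wit L z v \<longleftrightarrow> (\<exists>P\<in>#L. z \<in> edges P \<and> v \<in> ends P z)"

lemma EE_simps[simp]: "EE {#} = {}" "EE (add_mset P L) = edges P \<union> EE L" "EE (L1 + L2) = EE L1 \<union> EE L2"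
  unfolding EE_def by auto
lemma VV_simps[simp]: "VV {#} = {}" "VV (add_mset P L) = verts P \<union> VV L" "VV (L1 + L2) = VV L1 \<union> VV L2"
  unfolding VV_def by auto
lemma cnt_simps[simp]: "cnt {#} y = 0" "cnt (add_mset P L) y = (if y \<in> edges P then Suc (cnt L y) else cnt L y)"
  "cnt (L1 + L2) y = cnt L1 y + cnt L2 y"
  unfolding cnt_def by auto

lemma cnt_zero: "cnt L y = 0 \<longleftrightarrow> y \<notin> EE L"
  unfolding cnt_def EE_def by (auto simp: filter_mset_eq_conv)

lemma EE_mem: "P \<in># L \<Longrightarrow> edges P \<subseteq> EE L"
  unfolding EE_def by auto
lemma VV_mem: "P \<in># L \<Longrightarrow> verts P \<subseteq> VV L"
  unfolding VV_def by auto

lemma EE_sub: "N \<subseteq># L \<Longrightarrow> EE N \<subseteq> EE L"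
  unfolding EE_def by (auto dest: mset_subset_eqD)

lemma size_Suc_obtain:
  assumes "size M = Suc n"
  shows "\<exists>a N. M = add_mset a N \<and> size N = n"
proof -
  obtain a where a: "a \<in># M" using size_eq_Suc_imp_elem[OF assms] by blast
  define N where "N = M - {#a#}"
  have "M = add_mset a N" using a unfolding N_def by simp
  moreover then have "size N = n" using assms by simp
  ultimately show ?thesis by blast
qed

lemma cnt_one_filter:
  assumes "cnt L y = 1"
  obtains R where "filter_mset (\<lambda>P. y \<in> edges P) L = {#R#}"
proof -
  have "size (filter_mset (\<lambda>P. y \<in> edges P) L) = Suc 0" using assms unfolding cnt_def by simp
  then obtain R N where "filter_mset (\<lambda>P. y \<in> edges P) L = add_mset R N" "size N = 0"
    using size_Suc_obtain by blast
  then show ?thesis using that by simp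
qed

lemma cnt_two_filter:
  assumes "cnt L y = 2"
  obtains R1 R2 where "filter_mset (\<lambda>P. y \<in> edges P) L = {#R1, R2#}"
proof -
  have "size (filter_mset (\<lambda>P. y \<in> edges P) L) = Suc (Suc 0)" using assms unfolding cnt_def by simp
  then obtain R1 N where "filter_mset (\<lambda>P. y \<in> edges P) L = add_mset R1 N" "size N = Suc 0"
    using size_Suc_obtain by blast
  moreover obtain R2 N' where "N = add_mset R2 N'" "size N' = 0"
    using size_Suc_obtain[OF \<open>size N = Suc 0\<close>] by blast
  ultimately show ?thesis using that by simp
qed

lemma mem_filter_cnt: "R \<in># L \<Longrightarrow> y \<in> edges R \<Longrightarrow> R \<in># filter_mset (\<lambda>P. y \<in> edges P) L"
  by simp

lemma filter_pos: "y \<in> EE L \<Longrightarrow> 1 \<le> cnt L y"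
  using cnt_zero[of L y] by linarith

definition pinv :: "('v, 'e) mgraph multiset \<Rightarrow> bool" where
  "pinv L \<longleftrightarrow> (\<forall>P\<in>#L. wf_graph P) \<and> (\<forall>y. cnt L y \<le> 2) \<and>
     (\<forall>P\<in>#L. \<forall>Q\<in>#L. \<forall>y. y \<in> edges P \<longrightarrow> y \<in> edges Q \<longrightarrow> ends P y = ends Q y) \<and>
     (\<forall>y. cnt L y = 2 \<longrightarrow> (\<exists>L1 L2. L = L1 + L2 \<and> EE L1 \<inter> EE L2 = {y})) \<and>
     (\<forall>L1 L2. L = L1 + L2 \<longrightarrow> (\<forall>v\<in>VV L1 \<inter> VV L2. \<exists>z\<in>EE L1 \<inter> EE L2. wit L z v))"

lemma pinv_init:
  assumes "wf_graph G"
  shows "pinv {#G#}"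
proof -
  have c: "cnt {#G#} y \<le> 1" for y by simp
  have e: "VV L1 \<inter> VV L2 = {}" if "{#G#} = L1 + L2" for L1 L2 :: "('a, 'b) mgraph multiset"
    using that unfolding single_is_union by auto
  have "cnt {#G#} y \<noteq> 2" for y using c[of y] by linarith
  then show ?thesis unfolding pinv_def using assms c e by auto
qed


lemma add_mset_union_cases:
  assumes "add_mset a M = L1 + L2"
  shows "(\<exists>L1'. L1 = add_mset a L1' \<and> M = L1' + L2) \<or> (\<exists>L2'. L2 = add_mset a L2' \<and> M = L1 + L2')"
proof -
  have "a \<in># L1 + L2" using assms by (metis union_single_eq_member)
  then show ?thesis
  proof (cases "a \<in># L1")
    case True
    then have "L1 = add_mset a (L1 - {#a#})" by simp
    then have "add_mset a M = add_mset a ((L1 - {#a#}) + L2)" using assms by (metis union_mset_add_mset_left)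
    then have "M = (L1 - {#a#}) + L2" by simp
    then show ?thesis using \<open>L1 = _\<close> by blast
  next
    case False
    then have a2: "a \<in># L2" using \<open>a \<in># L1 + L2\<close> by simp
    then have "L2 = add_mset a (L2 - {#a#})" by simp
    then have "add_mset a M = add_mset a (L1 + (L2 - {#a#}))" using assms by (metis union_mset_add_mset_right)
    then have "M = L1 + (L2 - {#a#})" by simp
    then show ?thesis using \<open>L2 = _\<close> by blast
  qed
qed

lemma add2_union_cases:
  assumes "add_mset a (add_mset b M) = L1 + L2"
  obtains N1 N2 where "M = N1 + N2" "L1 = add_mset a (add_mset b N1)" "L2 = N2"
    | N1 N2 where "M = N1 + N2" "L1 = N1" "L2 = add_mset a (add_mset b N2)"
    | N1 N2 where "M = N1 + N2" "L1 = add_mset a N1" "L2 = add_mset b N2"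
    | N1 N2 where "M = N1 + N2" "L1 = add_mset b N1" "L2 = add_mset a N2"
proof -
  from add_mset_union_cases[OF assms] show ?thesis
  proof (elim disjE exE conjE)
    fix L1' assume l1: "L1 = add_mset a L1'" and m: "add_mset b M = L1' + L2"
    from add_mset_union_cases[OF m] show ?thesis
    proof (elim disjE exE conjE)
      fix L1'' assume "L1' = add_mset b L1''" "M = L1'' + L2"
      then show ?thesis using that(1) l1 by blast
    next
      fix L2' assume "L2 = add_mset b L2'" "M = L1' + L2'"
      then show ?thesis using that(3) l1 by blast
    qed
  next
    fix L2' assume l2: "L2 = add_mset a L2'" and m: "add_mset b M = L1 + L2'"
    from add_mset_union_cases[OF m] show ?thesis
    proof (elim disjE exE conjE)
      fix L1'' assume "L1 = add_mset b L1''" "M = L1'' + L2'"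
      then show ?thesis using that(4) l2 by blast
    next
      fix L2'' assume "L2' = add_mset b L2''" "M = L1 + L2''"
      then show ?thesis using that(2) l2 by blast
    qed
  qed
qed

locale splitctx =
  fixes H :: "('v, 'e) mgraph" and M H1 H2 and x :: 'e
  assumes pv: "pinv (add_mset H M)"
    and xf: "x \<notin> EE (add_mset H M)"
    and wf1: "wf_graph H1" and wf2: "wf_graph H2"
    and e12: "edges H1 \<inter> edges H2 = {x}" and eU: "edges H1 \<union> edges H2 = insert x (edges H)"
    and n1: "\<And>y. y \<in> edges H1 \<Longrightarrow> y \<noteq> x \<Longrightarrow> ends H1 y = ends H y"
    and n2: "\<And>y. y \<in> edges H2 \<Longrightarrow> y \<noteq> x \<Longrightarrow> ends H2 y = ends H y"
    and nx: "ends H1 x = ends H2 x"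
    and v12: "verts H1 \<inter> verts H2 \<subseteq> ends H1 x" and vU: "verts H1 \<union> verts H2 = verts H"
begin

abbreviation "L \<equiv> add_mset H M"
abbreviation "L' \<equiv> add_mset H1 (add_mset H2 M)"

lemma pv_parts:
  "\<And>P. P \<in># L \<Longrightarrow> wf_graph P"
  "\<And>y. cnt L y \<le> 2"
  "\<And>P Q y. P \<in># L \<Longrightarrow> Q \<in># L \<Longrightarrow> y \<in> edges P \<Longrightarrow> y \<in> edges Q \<Longrightarrow> ends P y = ends Q y"
  "\<And>y. cnt L y = 2 \<Longrightarrow> \<exists>L1 L2. L = L1 + L2 \<and> EE L1 \<inter> EE L2 = {y}"
  "\<And>L1 L2 v. L = L1 + L2 \<Longrightarrow> v \<in> VV L1 \<Longrightarrow> v \<in> VV L2 \<Longrightarrow> \<exists>z\<in>EE L1 \<inter> EE L2. wit L z v"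
  using pv unfolding pinv_def by blast+

lemma xM: "x \<notin> EE M" "x \<notin> edges H" using xf by auto

lemma x12: "x \<in> edges H1" "x \<in> edges H2" using e12 by auto

lemma cnt': "cnt L' y = (if y = x then 2 else cnt L y)"
proof (cases "y = x")
  case True
  have "cnt M x = 0" using xM cnt_zero by metis
  then show ?thesis using True x12 xM by simp
next
  case False
  then have "(y \<in> edges H1 \<or> y \<in> edges H2) \<longleftrightarrow> y \<in> edges H" using eU by blast
  moreover have "\<not> (y \<in> edges H1 \<and> y \<in> edges H2)" using e12 False by blast
  ultimately show ?thesis using False by auto
qed

lemma wH: "wf_graph H" using pv_parts(1) by simp

lemma wit_tr:
  assumes "wit L z v" "z \<noteq> x"
  shows "wit L' z v"
proof -
  obtain P where P: "P \<in># L" "z \<in> edges P" "v \<in> ends P z" using assms(1) unfolding wit_def by blast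
  show ?thesis
  proof (cases "P = H")
    case False
    then show ?thesis using P unfolding wit_def by auto
  next
    case True
    then have "z \<in> edges H1 \<or> z \<in> edges H2" using P eU by blast
    then show ?thesis
    proof
      assume "z \<in> edges H1" then show ?thesis using n1 assms(2) P True unfolding wit_def by force
    next
      assume "z \<in> edges H2" then show ?thesis using n2 assms(2) P True unfolding wit_def by force
    qed
  qed
qed

lemma ends_in_H2:
  assumes "wit L z v" "z \<in> edges H2" "z \<noteq> x"
  shows "v \<in> verts H2"
proof -
  obtain P where P: "P \<in># L" "z \<in> edges P" "v \<in> ends P z" using assms(1) unfolding wit_def by blast
  have zH: "z \<in> edges H" using assms(2,3) eU by blast
  have "ends P z = ends H z" using pv_parts(3)[OF P(1) _ P(2) zH] by simp
  also have "\<dots> = ends H2 z" using n2 assms(2,3) by simp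
  finally show ?thesis using P(3) wf2 assms(2) unfolding wf_graph_def by blast
qed

lemma ends_in_H1:
  assumes "wit L z v" "z \<in> edges H1" "z \<noteq> x"
  shows "v \<in> verts H1"
proof -
  obtain P where P: "P \<in># L" "z \<in> edges P" "v \<in> ends P z" using assms(1) unfolding wit_def by blast
  have zH: "z \<in> edges H" using assms(2,3) eU by blast
  have "ends P z = ends H z" using pv_parts(3)[OF P(1) _ P(2) zH] by simp
  also have "\<dots> = ends H1 z" using n1 assms(2,3) by simp
  finally show ?thesis using P(3) wf1 assms(2) unfolding wf_graph_def by blast
qed

lemma cross:
  assumes M: "M = N1 + N2" and v: "v \<in> VV (add_mset H1 N1)" "v \<in> VV (add_mset H2 N2)"
  shows "\<exists>z\<in>EE (add_mset H1 N1) \<inter> EE (add_mset H2 N2). wit L' z v"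
proof -
  have xN: "x \<notin> EE N1" "x \<notin> EE N2" using xM M by auto
  have s0: "\<exists>z\<in>EE (add_mset H1 N1) \<inter> EE (add_mset H2 N2). wit L' z v"
    if t: "v \<in> verts H1" "v \<in> verts H2" for v
  proof -
    have "v \<in> ends H1 x" using t v12 by blast
    then have "wit L' x v" using x12 unfolding wit_def by auto
    then show ?thesis using x12 by auto
  qed
  have LA: "L = add_mset H N1 + N2" "L = N1 + add_mset H N2" using M by simp_all
  have s1: "\<exists>z\<in>EE (add_mset H1 N1) \<inter> EE (add_mset H2 N2). wit L' z v"
    if t: "v \<in> verts H1" "v \<in> VV N2" for v
  proof -
    have "v \<in> VV (add_mset H N1)" using t vU by auto
    then obtain z where z: "z \<in> EE (add_mset H N1)" "z \<in> EE N2" "wit L z v"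
      using pv_parts(5)[OF LA(1) _ t(2)] by blast
    have zx: "z \<noteq> x" using z xN by auto
    have w': "wit L' z v" using wit_tr[OF z(3) zx] .
    consider "z \<in> EE N1" | "z \<in> edges H1" | "z \<in> edges H2" "z \<notin> edges H1"
      using z(1) eU by auto
    then show ?thesis
    proof cases
      case 1 then show ?thesis using z w' by auto
    next
      case 2 then show ?thesis using z w' by auto
    next
      case 3
      then have "v \<in> verts H2" using ends_in_H2[OF z(3) _ zx] by simp
      then show ?thesis using s0 t by blast
    qed
  qed
  have s2: "\<exists>z\<in>EE (add_mset H1 N1) \<inter> EE (add_mset H2 N2). wit L' z v"
    if t: "v \<in> VV N1" "v \<in> verts H2" for v
  proof -
    have "v \<in> VV (add_mset H N2)" using t vU by auto
    then obtain z where z: "z \<in> EE N1" "z \<in> EE (add_mset H N2)" "wit L z v"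
      using pv_parts(5)[OF LA(2) t(1)] by blast
    have zx: "z \<noteq> x" using z xN by auto
    have w': "wit L' z v" using wit_tr[OF z(3) zx] .
    consider "z \<in> EE N2" | "z \<in> edges H2" | "z \<in> edges H1" "z \<notin> edges H2"
      using z(2) eU by auto
    then show ?thesis
    proof cases
      case 1 then show ?thesis using z w' by auto
    next
      case 2 then show ?thesis using z w' by auto
    next
      case 3
      then have "v \<in> verts H1" using ends_in_H1[OF z(3) _ zx] by simp
      then show ?thesis using s0 t by blast
    qed
  qed
  have s3: "\<exists>z\<in>EE (add_mset H1 N1) \<inter> EE (add_mset H2 N2). wit L' z v"
    if t: "v \<in> VV N1" "v \<in> VV N2" for v
  proof -
    have "v \<in> VV (add_mset H N1)" using t by auto
    then obtain z where z: "z \<in> EE (add_mset H N1)" "z \<in> EE N2" "wit L z v"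
      using pv_parts(5)[OF LA(1) _ t(2)] by blast
    have zx: "z \<noteq> x" using z xN by auto
    have w': "wit L' z v" using wit_tr[OF z(3) zx] .
    consider "z \<in> EE N1" | "z \<in> edges H1" | "z \<in> edges H2" "z \<notin> edges H1"
      using z(1) eU by auto
    then show ?thesis
    proof cases
      case 1 then show ?thesis using z w' by auto
    next
      case 2 then show ?thesis using z w' by auto
    next
      case 3
      then have "v \<in> verts H2" using ends_in_H2[OF z(3) _ zx] by simp
      then show ?thesis using s2 t by blast
    qed
  qed
  have "v \<in> verts H1 \<or> v \<in> VV N1" "v \<in> verts H2 \<or> v \<in> VV N2" using v by auto
  then show ?thesis using s0 s1 s2 s3 by blast
qed

end


context splitctx
begin

lemma sw: "splitctx H M H2 H1 x"
  unfolding splitctx_def using pv xf wf1 wf2 e12 eU n1 n2 nx v12 vU by (auto simp: Int_commute Un_commute)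

lemma I6':
  assumes "L' = L1 + L2" "v \<in> VV L1" "v \<in> VV L2"
  shows "\<exists>z\<in>EE L1 \<inter> EE L2. wit L' z v"
proof -
  from add2_union_cases[OF assms(1)] show ?thesis
  proof cases
    case (1 N1 N2)
    have LL: "L = add_mset H N1 + N2" using 1 by simp
    have "v \<in> VV (add_mset H N1)" using assms(2) 1 vU by auto
    then obtain z where z: "z \<in> EE (add_mset H N1)" "z \<in> EE N2" "wit L z v"
      using pv_parts(5)[OF LL _ ] assms(3) 1 by blast
    have zx: "z \<noteq> x" using z xM 1 by auto
    have "z \<in> EE L1" using z(1) 1 eU by auto
    then show ?thesis using z 1 wit_tr[OF z(3) zx] by auto
  next
    case (2 N1 N2)
    have LL: "L = N1 + add_mset H N2" using 2 by simp
    have "v \<in> VV (add_mset H N2)" using assms(3) 2 vU by auto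
    then obtain z where z: "z \<in> EE N1" "z \<in> EE (add_mset H N2)" "wit L z v"
      using pv_parts(5)[OF LL] assms(2) 2 by blast
    have zx: "z \<noteq> x" using z xM 2 by auto
    have "z \<in> EE L2" using z(2) 2 eU by auto
    then show ?thesis using z 2 wit_tr[OF z(3) zx] by auto
  next
    case (3 N1 N2)
    then show ?thesis using cross[of N1 N2 v] assms by simp
  next
    case (4 N1 N2)
    have "\<exists>z\<in>EE (add_mset H2 N1) \<inter> EE (add_mset H1 N2). wit (add_mset H2 (add_mset H1 M)) z v"
      using splitctx.cross[OF sw, of N1 N2 v] 4 assms by simp
    then show ?thesis using 4 by (simp add: add_mset_commute)
  qed
qed

lemma I4_other:
  assumes "y \<noteq> x" "cnt L' y = 2"
  shows "\<exists>L1 L2. L' = L1 + L2 \<and> EE L1 \<inter> EE L2 = {y}"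
proof -
  have "cnt L y = 2" using assms cnt' by simp
  then obtain L1 L2 where LL: "L = L1 + L2" "EE L1 \<inter> EE L2 = {y}" using pv_parts(4) by blast
  have EH: "edges H1 \<union> edges H2 = insert x (edges H)" using eU .
  from add_mset_union_cases[OF LL(1)] show ?thesis
  proof (elim disjE exE conjE)
    fix L1' assume a: "L1 = add_mset H L1'" "M = L1' + L2"
    have "x \<notin> EE L2" using xM a by auto
    then have "EE (add_mset H1 (add_mset H2 L1')) \<inter> EE L2 = {y}" using LL(2) a EH by auto
    moreover have "L' = add_mset H1 (add_mset H2 L1') + L2" using a by simp
    ultimately show ?thesis by blast
  next
    fix L2' assume a: "L2 = add_mset H L2'" "M = L1 + L2'"
    have "x \<notin> EE L1" using xM a by auto
    then have "EE L1 \<inter> EE (add_mset H1 (add_mset H2 L2')) = {y}" using LL(2) a EH by auto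
    moreover have "L' = L1 + add_mset H1 (add_mset H2 L2')" using a by simp
    ultimately show ?thesis by blast
  qed
qed

definition "S = edges H1 - {x}"
definition "Qp N \<longleftrightarrow> N \<subseteq># M \<and> EE (M - N) \<inter> (S \<union> EE N) = {}"

lemma I4_x: "\<exists>L1 L2. L' = L1 + L2 \<and> EE L1 \<inter> EE L2 = {x}"
proof -
  have "Qp M" unfolding Qp_def by simp
  then obtain M1 where M1: "Qp M1" and mn: "\<And>N. Qp N \<Longrightarrow> size M1 \<le> size N"
    using ex_has_least_nat[of Qp M size] by blast
  have M1M: "M1 \<subseteq># M" and M1d: "EE (M - M1) \<inter> (S \<union> EE M1) = {}" using M1 unfolding Qp_def by auto
  have conn: "EE A \<inter> (S \<union> EE B) \<noteq> {}" if ab: "M1 = A + B" "A \<noteq> {#}" for A B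
  proof
    assume e: "EE A \<inter> (S \<union> EE B) = {}"
    have BM: "B \<subseteq># M" using ab M1M by (metis mset_subset_eq_add_right subset_mset.order_trans)
    have MB: "M - B = A + (M - M1)" using ab M1M
      by (metis add.commute subset_mset.add_diff_assoc2 diff_union_cancelR mset_subset_eq_add_right
          subset_mset.diff_add)
    have "EE (M - B) \<inter> (S \<union> EE B) = {}"
      using e M1d ab unfolding MB by auto
    then have "Qp B" using BM unfolding Qp_def by simp
    then have "size M1 \<le> size B" using mn by blast
    moreover have "size M1 = size A + size B" using ab by simp
    moreover have "size A > 0" using ab by (simp add: nonempty_has_size)
    ultimately show False by simp
  qed
  define M2 where "M2 = M - M1"
  have MM: "M = M1 + M2" using M1M unfolding M2_def by simp
  have key: "EE M1 \<inter> edges H2 = {}"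
  proof (rule ccontr)
    assume "EE M1 \<inter> edges H2 \<noteq> {}"
    then obtain z where z: "z \<in> EE M1" "z \<in> edges H2" by auto
    have zx: "z \<noteq> x" using z MM xM by auto
    have zH: "z \<in> edges H" using z zx eU by blast
    have zS: "z \<notin> S" using z zx e12 unfolding S_def by auto
    obtain Q where Q: "Q \<in># M1" "z \<in> edges Q" using z(1) unfolding EE_def by auto
    have c1: "1 \<le> cnt M1 z" using filter_pos[OF z(1)] .
    have cM: "cnt M z = cnt M1 z + cnt M2 z" using MM by simp
    have cL: "cnt L z = Suc (cnt M z)" using zH by simp
    then have cL2: "cnt L z = 2" using pv_parts(2)[of z] c1 cM by linarith
    then have cM1: "cnt M1 z = 1" using cL cM c1 by linarith
    obtain L1 L2 where LL: "L = L1 + L2" "EE L1 \<inter> EE L2 = {z}" "H \<in># L1"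
    proof -
      obtain K1 K2 where K: "L = K1 + K2" "EE K1 \<inter> EE K2 = {z}" using pv_parts(4)[OF cL2] by blast
      have "H \<in># K1 + K2" using K(1) by (metis union_single_eq_member)
      then show ?thesis
      proof (cases "H \<in># K1")
        case True then show ?thesis using that K by blast
      next
        case False
        then have "H \<in># K2" using \<open>H \<in># K1 + K2\<close> by simp
        then show ?thesis using that[of K2 K1] K by (simp add: Int_commute add.commute)
      qed
    qed
    define A where "A = M1 \<inter># L2"
    define B where "B = M1 - A"
    have AM1: "A \<subseteq># M1" unfolding A_def by simp
    have AB: "M1 = A + B" unfolding B_def using subset_mset.add_diff_inverse[OF AM1] by simp
    have AL2: "A \<subseteq># L2" unfolding A_def by simp
    have BL1: "B \<subseteq># L1"
    proof (rule mset_subset_eqI)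
      fix R
      have "count M1 R \<le> count M R" using M1M by (simp add: mset_subset_eq_count)
      moreover have "count L R = count L1 R + count L2 R" using LL(1) by simp
      moreover have "count L R = count M R + (if R = H then 1 else 0)" by simp
      ultimately show "count B R \<le> count L1 R" unfolding B_def A_def by auto
    qed
    have QL2: "Q \<in># L2"
    proof -
      have zL2: "z \<in> EE L2" using LL(2) by auto
      have "cnt L z = cnt L1 z + cnt L2 z" using LL(1) by simp
      moreover have "1 \<le> cnt L2 z" using filter_pos[OF zL2] .
      moreover have "1 \<le> cnt L1 z" using filter_pos[of z L1] EE_mem[OF LL(3)] zH by blast
      ultimately have c21: "cnt L2 z = 1" "cnt L1 z = 1" using cL2 by linarith+
      have FM: "filter_mset (\<lambda>P. z \<in> edges P) M = {#Q#}"
      proof -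
        have "cnt M z = 1" using cM1 cM cL cL2 by linarith
        then obtain R where R: "filter_mset (\<lambda>P. z \<in> edges P) M = {#R#}" by (rule cnt_one_filter)
        have "Q \<in># filter_mset (\<lambda>P. z \<in> edges P) M" using Q M1M by (auto dest: mset_subset_eqD)
        then show ?thesis using R by simp
      qed
      have FL: "filter_mset (\<lambda>P. z \<in> edges P) L = add_mset H {#Q#}"
        using zH FM by simp
      obtain R1 where R1: "filter_mset (\<lambda>P. z \<in> edges P) L1 = {#R1#}"
        using cnt_one_filter[OF c21(2)] by blast
      have "H \<in># filter_mset (\<lambda>P. z \<in> edges P) L1" using LL(3) zH by simp
      then have FL1: "filter_mset (\<lambda>P. z \<in> edges P) L1 = {#H#}" using R1 by simp
      have "filter_mset (\<lambda>P. z \<in> edges P) L = filter_mset (\<lambda>P. z \<in> edges P) L1 + filter_mset (\<lambda>P. z \<in> edges P) L2"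
        using LL(1) by simp
      then have "add_mset H {#Q#} = add_mset H (filter_mset (\<lambda>P. z \<in> edges P) L2)"
        using FL FL1 by simp
      then have "filter_mset (\<lambda>P. z \<in> edges P) L2 = {#Q#}" by simp
      then have "Q \<in># filter_mset (\<lambda>P. z \<in> edges P) L2" by simp
      then show ?thesis by simp
    qed
    have QA: "Q \<in># A" using Q(1) QL2 unfolding A_def by simp
    have "A \<noteq> {#}" using QA by auto
    then have "EE A \<inter> (S \<union> EE B) \<noteq> {}" using conn[OF AB] by blast
    moreover have "EE A \<subseteq> EE L2" using EE_sub[OF AL2] .
    moreover have "EE B \<subseteq> EE L1" using EE_sub[OF BL1] .
    moreover have "S \<subseteq> EE L1" using EE_mem[OF LL(3)] eU unfolding S_def by auto
    ultimately have "z \<in> S \<union> EE B"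
    proof -
      assume a: "EE A \<inter> (S \<union> EE B) \<noteq> {}" "EE A \<subseteq> EE L2" "EE B \<subseteq> EE L1" "S \<subseteq> EE L1"
      then obtain w where w: "w \<in> EE A" "w \<in> S \<union> EE B" by blast
      then have "w \<in> EE L1 \<inter> EE L2" using a by blast
      then have "w = z" using LL(2) by blast
      then show ?thesis using w by simp
    qed
    then have "z \<in> EE B" using zS by simp
    then have "1 \<le> cnt B z" using filter_pos[of z B] by blast
    moreover have "1 \<le> cnt A z" using filter_pos[of z A] EE_mem[OF QA] Q(2) by blast
    moreover have "cnt M1 z = cnt A z + cnt B z" using AB by simp
    ultimately show False using cM1 by linarith
  qed
  have "EE (add_mset H1 M1) \<inter> EE (add_mset H2 M2) = {x}"
  proof -
    have xM2: "x \<notin> EE M2" using xM MM by simp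
    have "S \<inter> EE M2 = {}" using M1d unfolding M2_def by blast
    moreover have "edges H1 \<subseteq> insert x S" unfolding S_def by blast
    ultimately have "edges H1 \<inter> EE M2 = {}" using xM2 by blast
    moreover have "EE M1 \<inter> EE M2 = {}" using M1d unfolding M2_def by blast
    ultimately show ?thesis using e12 key x12 by auto
  qed
  moreover have "L' = add_mset H1 M1 + add_mset H2 M2" using MM by simp
  ultimately show ?thesis by blast
qed

lemma pinv_L': "pinv L'"
  unfolding pinv_def
proof (intro conjI allI impI ballI)
  fix P assume "P \<in># L'" then show "wf_graph P" using wf1 wf2 pv_parts(1) by auto
next
  fix y show "cnt L' y \<le> 2" using cnt' pv_parts(2) by simp
next
  fix P Q y assume P: "P \<in># L'" and Q: "Q \<in># L'" and yP: "y \<in> edges P" and yQ: "y \<in> edges Q"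
  have tr: "\<exists>P'\<in>#L. y \<in> edges P' \<and> ends P' y = ends P y" if "P \<in># L'" "y \<in> edges P" "y \<noteq> x" for P
    using that n1 n2 eU by auto
  show "ends P y = ends Q y"
  proof (cases "y = x")
    case True
    then have "P \<in> {H1, H2}" "Q \<in> {H1, H2}" using P Q yP yQ xM unfolding EE_def by auto
    then show ?thesis using nx True by auto
  next
    case False
    obtain P' where P': "P' \<in># L" "y \<in> edges P'" "ends P' y = ends P y" using tr[OF P yP False] by blast
    obtain Q' where Q': "Q' \<in># L" "y \<in> edges Q'" "ends Q' y = ends Q y" using tr[OF Q yQ False] by blast
    show ?thesis using pv_parts(3)[OF P'(1) Q'(1) P'(2) Q'(2)] P' Q' by simp
  qed
next
  fix y assume "cnt L' y = 2"
  then show "\<exists>L1 L2. L' = L1 + L2 \<and> EE L1 \<inter> EE L2 = {y}"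
    using I4_other I4_x by (cases "y = x") auto
next
  fix L1 L2 v assume "L' = L1 + L2" "v \<in> VV L1 \<inter> VV L2"
  then show "\<exists>z\<in>EE L1 \<inter> EE L2. wit L' z v" using I6' by blast
qed

end


context sepx
begin

lemma ac: "a \<noteq> c" using c_ne by simp

lemma wf_H1: "wf_graph H1"
proof -
  have fv: "finite (verts H)" and fe: "finite (edges H)" using wf by (auto simp: wf_graph_def)
  have "finite (verts H1)" using verts_H1 comp_verts cv fv by (auto intro: finite_subset)
  moreover have "finite (edges H1)" using finH1 .
  moreover have "card (ends H1 f) = 2 \<and> ends H1 f \<subseteq> verts H1" if f: "f \<in> edges H1" for f
  proof (cases "f = x")
    case True then show ?thesis using ends_H1 verts_H1 aC ac by auto
  next
    case False
    then have "f \<in> Ea" using f edges_H1 by auto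
    then show ?thesis using ends_H1 verts_H1 False ends_wf Ea_sub unfolding Ea_def by auto
  qed
  ultimately show ?thesis unfolding wf_graph_def by blast
qed

lemma wf_H2: "wf_graph H2"
proof -
  have fv: "finite (verts H)" and fe: "finite (edges H)" using wf by (auto simp: wf_graph_def)
  have "finite (verts H2)" using verts_H2 comp_verts cv fv by (auto intro: finite_subset)
  moreover have "finite (edges H2)" using finH2 .
  moreover have "card (ends H2 f) = 2 \<and> ends H2 f \<subseteq> verts H2" if f: "f \<in> edges H2" for f
  proof (cases "f = x")
    case True then show ?thesis using ends_H2 verts_H2 ac by auto
  next
    case False
    then have "f = e \<or> f \<in> Eb" using f edges_H2 by auto
    then show ?thesis
    proof
      assume "f = e" then show ?thesis using ends_H2 verts_H2 False eab ab bC by auto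
    next
      assume "f \<in> Eb" then show ?thesis using ends_H2 verts_H2 False ends_wf Eb_sub unfolding Eb_def by auto
    qed
  qed
  ultimately show ?thesis unfolding wf_graph_def by blast
qed

lemma split_ctx:
  assumes "pinv (add_mset H M)" "x \<notin> EE (add_mset H M)"
  shows "splitctx H M H1 H2 x"
  unfolding splitctx_def
proof (intro conjI allI impI)
  show "pinv (add_mset H M)" "x \<notin> EE (add_mset H M)" using assms by auto
  show "wf_graph H1" using wf_H1 .
  show "wf_graph H2" using wf_H2 .
  show "edges H1 \<inter> edges H2 = {x}" using edges_H1 edges_H2 Ea_Eb e_notin by auto
  show "edges H1 \<union> edges H2 = insert x (edges H)" using edges_H1 edges_H2 edges_split by auto
  show "\<And>y. y \<in> edges H1 \<Longrightarrow> y \<noteq> x \<Longrightarrow> ends H1 y = ends H y" using ends_H1 by simp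
  show "\<And>y. y \<in> edges H2 \<Longrightarrow> y \<noteq> x \<Longrightarrow> ends H2 y = ends H y" using ends_H2 by simp
  show "ends H1 x = ends H2 x" using ends_H1 ends_H2 by simp
  show "verts H1 \<inter> verts H2 \<subseteq> ends H1 x" using verts_H1 verts_H2 ends_H1 disj by auto
  show "verts H1 \<union> verts H2 = verts H" using verts_H1 verts_H2 verts_split aC by auto
qed

end

definition Phic :: "('v, 'e) mgraph multiset \<Rightarrow> int" where
  "Phic L = (\<Sum>P\<in>#L. int (cmin P)) - int (size L)"
definition Phin :: "('v, 'e) mgraph multiset \<Rightarrow> int" where
  "Phin L = (\<Sum>P\<in>#L. int (nu P)) - int (size L)"

definition J :: "('v, 'e) mgraph multiset \<Rightarrow> bool" where
  "J L \<longleftrightarrow> pinv L \<and> (\<forall>P\<in>#L. dec P \<noteq> {})"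

lemma split_pres:
  assumes "J L" "split_step L L'"
  shows "J L' \<and> Phic L' = Phic L \<and> Phin L' = Phin L"
proof -
  obtain M H c e a x where st: "L = add_mset H M" "ve_separator H c e" "a \<in> ends H e"
    "x \<notin> \<Union>(edges ` set_mset L)"
    "L' = add_mset (split_first H c e a x) (add_mset (split_second H c e a x) M)"
    using assms(2) unfolding split_step_def by blast
  have pv: "pinv L" and dn: "\<forall>P\<in>#L. dec P \<noteq> {}" using assms(1) by (auto simp: J_def)
  have wfH: "wf_graph H" using pv st(1) by (auto simp: pinv_def)
  have vs: "biconnected H" "c \<in> verts H" "e \<in> edges H" "\<not> connected_avoid H {e} {c}"
    using st(2) by (auto simp: ve_separator_def)
  obtain b where eab: "ends H e = {a, b}"
  proof -
    obtain u w where "ends H e = {u, w}" "u \<noteq> w" using wfH vs(3) card2_obtain unfolding wf_graph_def by metis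
    then show ?thesis using st(3) that by (auto simp: insert_commute)
  qed
  have xf: "x \<notin> edges H" using st(1,4) by auto
  interpret S: sepx H c e a b x
    using wfH vs eab xf by unfold_locales auto
  have xEE: "x \<notin> EE (add_mset H M)" using st(1,4) unfolding EE_def by auto
  interpret C: splitctx H M S.H1 S.H2 x using S.split_ctx pv st(1) xEE by auto
  have L'e: "L' = add_mset S.H1 (add_mset S.H2 M)" using st(5) unfolding S.H1_def S.H2_def by simp
  have dH: "dec H \<noteq> {}" using dn st(1) by simp
  have sc: "dec S.H1 \<noteq> {}" "dec S.H2 \<noteq> {}" "cmin H + 1 = cmin S.H1 + cmin S.H2" "nu H + 1 = nu S.H1 + nu S.H2"
    using S.split_counts[OF dH] by auto
  have "J L'" using C.pinv_L' L'e sc dn st(1) unfolding J_def by auto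
  moreover have "Phic L' = Phic L" unfolding Phic_def L'e st(1) using sc(3) by simp
  moreover have "Phin L' = Phin L" unfolding Phin_def L'e st(1) using sc(4) by simp
  ultimately show ?thesis by blast
qed


lemma pair_eq:
  assumes "{#R1, R2#} = {#A, B#}"
  shows "(R1 = A \<and> R2 = B) \<or> (R1 = B \<and> R2 = A)"
proof -
  have "R1 \<in># {#A, B#}" using assms by (metis add_mset_commute union_single_eq_member)
  then have "R1 = A \<or> R1 = B" by auto
  then show ?thesis
  proof
    assume "R1 = A"
    then have "{#R2#} = {#B#}" using assms by simp
    then show ?thesis using \<open>R1 = A\<close> by simp
  next
    assume "R1 = B"
    then have "add_mset B {#R2#} = add_mset B {#A#}" using assms by (simp add: add_mset_commute)
    then have "{#R2#} = {#A#}" by simp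
    then show ?thesis using \<open>R1 = B\<close> by simp
  qed
qed

lemma merge_pres:
  assumes "J L" "merge_step L L'"
  shows "J L' \<and> Phic L' = Phic L \<and> Phin L' = Phin L"
proof -
  obtain M A B x where st: "L = add_mset A (add_mset B M)" "is_cycle_graph A" "is_cycle_graph B"
    "x \<in> edges A" "x \<in> edges B" "L' = add_mset (glue A B x) M"
    using assms(2) unfolding merge_step_def by blast
  define C where "C = glue A B x"
  have pv: "pinv L" and dn: "\<forall>P\<in>#L. dec P \<noteq> {}" using assms(1) by (auto simp: J_def)
  have pp: "\<And>P. P \<in># L \<Longrightarrow> wf_graph P"
    "\<And>y. cnt L y \<le> 2"
    "\<And>P Q y. P \<in># L \<Longrightarrow> Q \<in># L \<Longrightarrow> y \<in> edges P \<Longrightarrow> y \<in> edges Q \<Longrightarrow> ends P y = ends Q y"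
    "\<And>y. cnt L y = 2 \<Longrightarrow> \<exists>L1 L2. L = L1 + L2 \<and> EE L1 \<inter> EE L2 = {y}"
    "\<And>L1 L2 v. L = L1 + L2 \<Longrightarrow> v \<in> VV L1 \<Longrightarrow> v \<in> VV L2 \<Longrightarrow> \<exists>z\<in>EE L1 \<inter> EE L2. wit L z v"
    using pv unfolding pinv_def by blast+
  have cLx: "cnt L x = Suc (Suc (cnt M x))" using st by simp
  then have cMx: "cnt M x = 0" using pp(2)[of x] by linarith
  then have xM: "x \<notin> EE M" using cnt_zero by metis
  have cL2: "cnt L x = 2" using cLx cMx by simp
  have FL: "filter_mset (\<lambda>P. x \<in> edges P) L = {#A, B#}"
  proof -
    have "filter_mset (\<lambda>P. x \<in> edges P) M = {#}" using cMx unfolding cnt_def by simp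
    then show ?thesis using st by simp
  qed
  have eAx: "ends A x = ends B x" using pp(3)[of A B x] st by simp
  obtain L1 L2 where LL: "L = L1 + L2" "EE L1 \<inter> EE L2 = {x}" "A \<in># L1" "B \<in># L2"
  proof -
    obtain K1 K2 where K: "L = K1 + K2" "EE K1 \<inter> EE K2 = {x}" using pp(4)[OF cL2] by blast
    have "1 \<le> cnt K1 x" "1 \<le> cnt K2 x" using K(2) filter_pos[of x K1] filter_pos[of x K2] by blast+
    moreover have "cnt L x = cnt K1 x + cnt K2 x" using K(1) by simp
    ultimately have "cnt K1 x = 1" "cnt K2 x = 1" using cL2 by linarith+
    then obtain R1 R2 where R: "filter_mset (\<lambda>P. x \<in> edges P) K1 = {#R1#}"
      "filter_mset (\<lambda>P. x \<in> edges P) K2 = {#R2#}" using cnt_one_filter by metis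
    have "filter_mset (\<lambda>P. x \<in> edges P) L = filter_mset (\<lambda>P. x \<in> edges P) K1 + filter_mset (\<lambda>P. x \<in> edges P) K2"
      using K(1) by simp
    then have "{#R1, R2#} = {#A, B#}" using FL R by simp
    then have pe: "(R1 = A \<and> R2 = B) \<or> (R1 = B \<and> R2 = A)" by (rule pair_eq)
    have "R1 \<in># filter_mset (\<lambda>P. x \<in> edges P) K1" "R2 \<in># filter_mset (\<lambda>P. x \<in> edges P) K2"
      using R by simp_all
    then have RK: "R1 \<in># K1" "R2 \<in># K2" by simp_all
    have K': "L = K2 + K1" "EE K2 \<inter> EE K1 = {x}" using K by (simp_all add: add.commute Int_commute)
    from pe show ?thesis
    proof
      assume "R1 = A \<and> R2 = B" then show ?thesis using that[OF K(1,2)] RK by simp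
    next
      assume "R1 = B \<and> R2 = A" then show ?thesis using that[OF K'(1,2)] RK by simp
    qed
  qed
  have eAB: "edges A \<inter> edges B = {x}" using LL EE_mem[OF LL(3)] EE_mem[OF LL(4)] st(4,5) by blast
  have vAB: "verts A \<inter> verts B \<subseteq> ends A x"
  proof
    fix v assume v: "v \<in> verts A \<inter> verts B"
    then have "v \<in> VV L1" "v \<in> VV L2" using VV_mem[OF LL(3)] VV_mem[OF LL(4)] by auto
    then obtain z where z: "z \<in> EE L1 \<inter> EE L2" "wit L z v" using pp(5)[OF LL(1)] by blast
    then have "z = x" using LL(2) by blast
    then obtain P where P: "P \<in># L" "x \<in> edges P" "v \<in> ends P x" using z unfolding wit_def by blast
    then show "v \<in> ends A x" using pp(3)[OF P(1) _ P(2) st(4)] st(1) by simp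
  qed
  have cgC: "is_cycle_graph C" unfolding C_def using glue_cycle_graph[OF st(2,3,4,5) eAB eAx vAB] .
  have wfC: "wf_graph C" unfolding C_def using wf_glue pp(1)[of A] pp(1)[of B] st(1) by simp
  have vC: "verts C = verts A \<union> verts B" and eC: "edges C = (edges A \<union> edges B) - {x}"
    and nC: "\<And>f. ends C f = (if f \<in> edges A then ends A f else ends B f)"
    unfolding C_def glue_def by auto
  have L'e: "L' = add_mset C M" using st(6) C_def by simp
  have cnt_le: "cnt L' y \<le> cnt L y" for y using st(1) L'e eC by auto
  have witC: "wit L' z v" if w: "wit L z v" and zx: "z \<noteq> x" for z v
  proof -
    obtain P where P: "P \<in># L" "z \<in> edges P" "v \<in> ends P z" using w unfolding wit_def by blast
    show ?thesis
    proof (cases "P = A \<or> P = B")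
      case True
      then have zC: "z \<in> edges C" using P zx eC by auto
      have "ends C z = ends P z"
      proof (cases "z \<in> edges A")
        case True then show ?thesis using nC pp(3)[OF _ P(1) True P(2)] st(1) by simp
      next
        case False
        then have "z \<in> edges B" using zC eC by auto
        then show ?thesis using nC False pp(3)[OF _ P(1) _ P(2), of B] st(1) by simp
      qed
      then show ?thesis using zC P(3) L'e unfolding wit_def by auto
    next
      case False
      then have "P \<in># M" using P(1) st(1) by auto
      then show ?thesis using P L'e unfolding wit_def by auto
    qed
  qed
  have tr: "\<exists>P'\<in>#L. y \<in> edges P' \<and> ends P' y = ends P y" if "P \<in># L'" "y \<in> edges P" for P y
  proof (cases "P = C")
    case True
    then show ?thesis using that nC eC st(1) by (cases "y \<in> edges A") auto
  next
    case False
    then show ?thesis using that L'e st(1) by auto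
  qed
  have "pinv L'"
    unfolding pinv_def
  proof (intro conjI allI impI ballI)
    fix P assume "P \<in># L'" then show "wf_graph P" using wfC pp(1) L'e st(1) by auto
  next
    fix y show "cnt L' y \<le> 2" using cnt_le[of y] pp(2)[of y] by linarith
  next
    fix P Q y assume a: "P \<in># L'" "Q \<in># L'" "y \<in> edges P" "y \<in> edges Q"
    obtain P' where P': "P' \<in># L" "y \<in> edges P'" "ends P' y = ends P y" using tr[OF a(1,3)] by blast
    obtain Q' where Q': "Q' \<in># L" "y \<in> edges Q'" "ends Q' y = ends Q y" using tr[OF a(2,4)] by blast
    show "ends P y = ends Q y" using pp(3)[OF P'(1) Q'(1) P'(2) Q'(2)] P' Q' by simp
  next
    fix y assume c2: "cnt L' y = 2"
    have "x \<notin> edges C" using eC by simp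
    then have "cnt L' x = 0" using L'e cMx by simp
    then have yx: "y \<noteq> x" using c2 by auto
    have "cnt L y = 2" using cnt_le[of y] pp(2)[of y] c2 by linarith
    then obtain L1 L2 where K: "L = L1 + L2" "EE L1 \<inter> EE L2 = {y}" using pp(4) by blast
    from add2_union_cases[OF K(1)[unfolded st(1)]] show "\<exists>L1 L2. L' = L1 + L2 \<and> EE L1 \<inter> EE L2 = {y}"
    proof cases
      case (1 N1 N2)
      have "EE (add_mset C N1) \<inter> EE N2 = {y}" using K(2) 1 eC yx by auto
      moreover have "L' = add_mset C N1 + N2" using L'e 1 by simp
      ultimately show ?thesis by blast
    next
      case (2 N1 N2)
      have "EE N1 \<inter> EE (add_mset C N2) = {y}" using K(2) 2 eC yx by auto
      moreover have "L' = N1 + add_mset C N2" using L'e 2 by simp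
      ultimately show ?thesis by blast
    next
      case (3 N1 N2)
      then have "x \<in> EE L1 \<inter> EE L2" using st(4,5) by auto
      then show ?thesis using K(2) yx by auto
    next
      case (4 N1 N2)
      then have "x \<in> EE L1 \<inter> EE L2" using st(4,5) by auto
      then show ?thesis using K(2) yx by auto
    qed
  next
    fix L1 L2 v assume a: "L' = L1 + L2" "v \<in> VV L1 \<inter> VV L2"
    from add_mset_union_cases[OF a(1)[unfolded L'e]] show "\<exists>z\<in>EE L1 \<inter> EE L2. wit L' z v"
    proof (elim disjE exE conjE)
      fix N1 assume b: "L1 = add_mset C N1" "M = N1 + L2"
      have LL': "L = add_mset A (add_mset B N1) + L2" using st(1) b by simp
      have "v \<in> VV (add_mset A (add_mset B N1))" "v \<in> VV L2" using a(2) b vC by auto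
      then obtain z where z: "z \<in> EE (add_mset A (add_mset B N1))" "z \<in> EE L2" "wit L z v"
        using pp(5)[OF LL'] by blast
      have zx: "z \<noteq> x" using z xM b by auto
      have "z \<in> EE L1" using z(1) zx b eC by auto
      then show ?thesis using z witC[OF z(3) zx] by auto
    next
      fix N2 assume b: "L2 = add_mset C N2" "M = L1 + N2"
      have LL': "L = L1 + add_mset A (add_mset B N2)" using st(1) b by simp
      have "v \<in> VV L1" "v \<in> VV (add_mset A (add_mset B N2))" using a(2) b vC by auto
      then obtain z where z: "z \<in> EE L1" "z \<in> EE (add_mset A (add_mset B N2))" "wit L z v"
        using pp(5)[OF LL'] by blast
      have zx: "z \<noteq> x" using z xM b by auto
      have "z \<in> EE L2" using z(2) zx b eC by auto
      then show ?thesis using z witC[OF z(3) zx] by auto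
    qed
  qed
  moreover have "\<forall>P\<in>#L'. dec P \<noteq> {}" using dn cycle_graph_dec[OF cgC] L'e st(1) by auto
  moreover have "Phic L' = Phic L" unfolding Phic_def using L'e st(1) cycle_graph_cmin[OF cgC] cycle_graph_cmin[OF st(2)] cycle_graph_cmin[OF st(3)] by simp
  moreover have "Phin L' = Phin L" unfolding Phin_def using L'e st(1) cycle_graph_nu[OF cgC] cycle_graph_nu[OF st(2)] cycle_graph_nu[OF st(3)] by simp
  ultimately show ?thesis unfolding J_def by blast
qed

theorem theorem10:
  fixes G :: "('v, nat) mgraph" and K :: "('v, nat) mgraph multiset"
  assumes "wf_graph G" and "biconnected G" and "eulerian G"
    and "is_25_components G K"
  shows "int (cmin G) = (\<Sum>H\<in>#K. int (cmin H)) - int (size K) + 1 \<and>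
         int (nu G) = (\<Sum>H\<in>#K. int (nu H)) - int (size K) + 1"
proof -
  obtain L where s: "split_step\<^sup>*\<^sup>* {#G#} L" and m: "merge_step\<^sup>*\<^sup>* L K"
    using assms(4) unfolding is_25_components_def by blast
  let ?I = "\<lambda>L. J L \<and> Phic L = int (cmin G) - 1 \<and> Phin L = int (nu G) - 1"
  have i0: "?I {#G#}"
    using pinv_init[OF assms(1)] eulerian_dec[OF assms(1,3)] unfolding J_def Phic_def Phin_def by simp
  have iL: "?I L" using s
  proof (induction rule: rtranclp_induct)
    case base then show ?case using i0 .
  next
    case (step y z) then show ?case using split_pres by metis
  qed
  have iK: "?I K" using m
  proof (induction rule: rtranclp_induct)
    case base then show ?case using iL .
  next
    case (step y z) then show ?case using merge_pres by metis
  qed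
  then show ?thesis unfolding Phic_def Phin_def by linarith
qed

end
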